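(* Let $\lambda\in\mathbb{K}$. For each $n\ge1$ let $\mathcal{Q}^\lambda_n:=\mathbb{K}[x_1,\dots,x_n]$ with identity $1\in\mathbb{K}[x_1]$ and partial compositions $$(P\circ_iQ)(x_1,\dots,x_{n+m-1}):=P(x_1,\dots,x_{i-1},\theta^\lambda(x_i,\dots,x_{i+m-1}),x_{i+m},\dots,x_{n+m-1})\,Q(x_i,\dots,x_{i+m-1}).$$ Then $\mathcal{Q}^\lambda$ is a ns operad isomorphic to $\lambda\text{-}AsDer$, via $\mathrm{id}\mapsto 1\in\mathbb{K}[x_1]$, $D\mapsto x_1$, $\mu\mapsto 1\in\mathbb{K}[x_1,x_2]$; equivalently $\gamma(P;Q_1,\dots,Q_k)=P(\theta^\lambda(x_1,\dots,x_{i_1}),\theta^\lambda(x_{i_1+1},\dots,x_{i_1+i_2}),\dots)\,Q_1(x_1,\dots,x_{i_1})\,Q_2(x_{i_1+1},\dots,x_{i_1+i_2})\cdots$. Under this isomorphism the operation $(a_1,\dots,a_n)\mapsto D^{j_1}(a_1)\cdots D^{j_n}(a_n)$ corresponds to $x_1^{j_1}\cdots x_n^{j_n}$; in particular $\lambda\text{-}AsDer_n\cong\mathbb{K}[x_1,\dots,x_n]$.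
   Context: $\mathbb{K}$ is a commutative unital ring. A $\lambda$-derivation of an associative algebra $A$ is a linear map $D^A:A\to A$ with $D^A(ab)=D^A(a)b+aD^A(b)+\lambda D^A(a)D^A(b)$. $\lambda\text{-}AsDer$ is the ns operad governing associative algebras with a $\lambda$-derivation: generated by a unary $D$ and binary $\mu$ with relations $\mu\circ_1\mu=\mu\circ_2\mu$ and $D\circ_1\mu=\mu\circ_1D+\mu\circ_2D+\lambda(\mu\circ_1D)\circ_2D$. For variables $x_1,\dots,x_n$, $\theta^\lambda(x_1,\dots,x_n):=\sum_{k=1}^n\lambda^{k-1}\theta_k(x_1,\dots,x_n)$, where $\theta_k$ is the $k$th elementary symmetric function (so $\theta^\lambda=x_1+\cdots+x_n+\cdots+\lambda^{n-1}x_1\cdots x_n$). A ns operad is a family $(\mathcal{P}_n)_{n\ge1}$ with unit $\mathrm{id}\in\mathcal{P}_1$ and partial compositions $\circ_i:\mathcal{P}_m\otimes\mathcal{P}_n\to\mathcal{P}_{m+n-1}$ satisfying unitality, $(\lambda\circ_i\mu)\circ_{i-1+j}\nu=\lambda\circ_i(\mu\circ_j\nu)$ and $(\lambda\circ_i\mu)\circ_{k+m-1}\nu=(\lambda\circ_k\nu)\circ_i\mu$ for $i<k$. *)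

theory Defs
  imports Main "HOL-Library.Poly_Mapping"
begin

text \<open>P n is the n-th component (a K-submodule of the ambient type 'b, scalar action sc),
  e is the unit in P 1, and c n m i x y is the partial composition x \<circ>_i y
  for x in P n, y in P m, 1 \<le> i \<le> n (result in P (n+m-1)).\<close>

definition ns_operad ::
  "(nat \<Rightarrow> 'b::ab_group_add set) \<Rightarrow> ('a::comm_ring_1 \<Rightarrow> 'b \<Rightarrow> 'b) \<Rightarrow> 'b
     \<Rightarrow> (nat \<Rightarrow> nat \<Rightarrow> nat \<Rightarrow> 'b \<Rightarrow> 'b \<Rightarrow> 'b) \<Rightarrow> bool" where
  "ns_operad P sc e c \<longleftrightarrow>
     \<comment> \<open>each component is a K-module\<close>
     (\<forall>n\<ge>1. 0 \<in> P n \<and> (\<forall>x\<in>P n. \<forall>y\<in>P n. x + y \<in> P n) \<and> (\<forall>a. \<forall>x\<in>P n. sc a x \<in> P n)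
        \<and> (\<forall>a. \<forall>x\<in>P n. \<forall>y\<in>P n. sc a (x + y) = sc a x + sc a y)
        \<and> (\<forall>a b. \<forall>x\<in>P n. sc (a + b) x = sc a x + sc b x)
        \<and> (\<forall>a b. \<forall>x\<in>P n. sc (a * b) x = sc a (sc b x))
        \<and> (\<forall>x\<in>P n. sc 1 x = x)) \<and>
     e \<in> P 1 \<and>
     \<comment> \<open>partial compositions are well-typed and bilinear\<close>
     (\<forall>n m i x y. 1 \<le> m \<longrightarrow> 1 \<le> i \<longrightarrow> i \<le> n \<longrightarrow> x \<in> P n \<longrightarrow> y \<in> P m \<longrightarrow>
        c n m i x y \<in> P (n + m - 1)) \<and>
     (\<forall>n m i x x' y. 1 \<le> m \<longrightarrow> 1 \<le> i \<longrightarrow> i \<le> n \<longrightarrow> x \<in> P n \<longrightarrow> x' \<in> P n \<longrightarrow> y \<in> P m \<longrightarrow>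
        c n m i (x + x') y = c n m i x y + c n m i x' y) \<and>
     (\<forall>n m i x y y'. 1 \<le> m \<longrightarrow> 1 \<le> i \<longrightarrow> i \<le> n \<longrightarrow> x \<in> P n \<longrightarrow> y \<in> P m \<longrightarrow> y' \<in> P m \<longrightarrow>
        c n m i x (y + y') = c n m i x y + c n m i x y') \<and>
     (\<forall>n m i a x y. 1 \<le> m \<longrightarrow> 1 \<le> i \<longrightarrow> i \<le> n \<longrightarrow> x \<in> P n \<longrightarrow> y \<in> P m \<longrightarrow>
        c n m i (sc a x) y = sc a (c n m i x y) \<and> c n m i x (sc a y) = sc a (c n m i x y)) \<and>
     \<comment> \<open>unitality\<close>
     (\<forall>n\<ge>1. \<forall>x\<in>P n. c 1 n 1 e x = x \<and> (\<forall>i. 1 \<le> i \<longrightarrow> i \<le> n \<longrightarrow> c n 1 i x e = x)) \<and>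
     \<comment> \<open>sequential associativity\<close>
     (\<forall>l m k i j x y z. 1 \<le> i \<longrightarrow> i \<le> l \<longrightarrow> 1 \<le> j \<longrightarrow> j \<le> m \<longrightarrow> 1 \<le> k \<longrightarrow>
        x \<in> P l \<longrightarrow> y \<in> P m \<longrightarrow> z \<in> P k \<longrightarrow>
        c (l + m - 1) k (i - 1 + j) (c l m i x y) z = c l (m + k - 1) i x (c m k j y z)) \<and>
     \<comment> \<open>parallel associativity\<close>
     (\<forall>l m k i j x y z. 1 \<le> i \<longrightarrow> i < j \<longrightarrow> j \<le> l \<longrightarrow> 1 \<le> m \<longrightarrow> 1 \<le> k \<longrightarrow>
        x \<in> P l \<longrightarrow> y \<in> P m \<longrightarrow> z \<in> P k \<longrightarrow>
        c (l + m - 1) k (j + m - 1) (c l m i x y) z = c (l + k - 1) m i (c l k j x z) y)"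

text \<open>A polynomial is a finitely supported map from monomials (finitely supported exponent
  vectors, variable x_k has index k) to coefficients.\<close>

type_synonym 'a kpoly = "(nat \<Rightarrow>\<^sub>0 nat) \<Rightarrow>\<^sub>0 'a"

definition Xv :: "nat \<Rightarrow> 'a::comm_ring_1 kpoly" where
  "Xv k = Poly_Mapping.single (Poly_Mapping.single k 1) 1"

definition pconst :: "'a::comm_ring_1 \<Rightarrow> 'a kpoly" where
  "pconst c = Poly_Mapping.single 0 c"

definition qsc :: "'a::comm_ring_1 \<Rightarrow> 'a kpoly \<Rightarrow> 'a kpoly" where
  "qsc c p = pconst c * p"

definition psubst :: "(nat \<Rightarrow> 'a::comm_ring_1 kpoly) \<Rightarrow> 'a kpoly \<Rightarrow> 'a kpoly" where
  "psubst \<sigma> p = (\<Sum>mon\<in>Poly_Mapping.keys p.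
      pconst (Poly_Mapping.lookup p mon) * (\<Prod>v\<in>Poly_Mapping.keys mon. \<sigma> v ^ Poly_Mapping.lookup (mon :: nat \<Rightarrow>\<^sub>0 nat) v))"

definition Qc :: "nat \<Rightarrow> 'a::comm_ring_1 kpoly set" where
  "Qc n = {p. \<forall>m\<in>Poly_Mapping.keys p. Poly_Mapping.keys m \<subseteq> {1..n}}"

definition esym :: "nat set \<Rightarrow> nat \<Rightarrow> 'a::comm_ring_1 kpoly" where
  "esym A k = (\<Sum>S\<in>{S. S \<subseteq> A \<and> card S = k}. \<Prod>j\<in>S. Xv j)"

definition theta :: "'a::comm_ring_1 \<Rightarrow> nat \<Rightarrow> nat \<Rightarrow> 'a kpoly" where
  "theta lam i m = (\<Sum>k=1..m. pconst (lam ^ (k - 1)) * esym {i..<i + m} k)"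

definition qcomp :: "'a::comm_ring_1 \<Rightarrow> nat \<Rightarrow> nat \<Rightarrow> nat \<Rightarrow> 'a kpoly \<Rightarrow> 'a kpoly \<Rightarrow> 'a kpoly" where
  "qcomp lam n m i P Q =
     psubst (\<lambda>j. if j < i then Xv j else if j = i then theta lam i m else Xv (j + m - 1)) P
     * psubst (\<lambda>j. Xv (j + i - 1)) Q"

text \<open>Planar rooted trees with vertices labelled by D or mu; Leaf is the trivial tree (id).\<close>
datatype optree = Leaf | Dn optree | Mu optree optree

fun leaves :: "optree \<Rightarrow> nat" where
  "leaves Leaf = 1"
| "leaves (Dn t) = leaves t"
| "leaves (Mu t u) = leaves t + leaves u"

text \<open>Grafting s onto the i-th leaf (counted from the left, from 1) of t.\<close>
fun graft :: "nat \<Rightarrow> optree \<Rightarrow> optree \<Rightarrow> optree" where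
  "graft i Leaf s = (if i = 1 then s else Leaf)"
| "graft i (Dn t) s = Dn (graft i t s)"
| "graft i (Mu t u) s =
     (if i \<le> leaves t then Mu (graft i t s) u else Mu t (graft (i - leaves t) u s))"

text \<open>The free ns operad: arity-n part = free K-module on trees with n leaves.\<close>
definition Fc :: "nat \<Rightarrow> (optree \<Rightarrow>\<^sub>0 'a::comm_ring_1) set" where
  "Fc n = {f. \<forall>t\<in>Poly_Mapping.keys f. leaves t = n}"

definition ft :: "optree \<Rightarrow> (optree \<Rightarrow>\<^sub>0 'a::comm_ring_1)" where
  "ft t = Poly_Mapping.single t 1"

definition fsc :: "'a::comm_ring_1 \<Rightarrow> (optree \<Rightarrow>\<^sub>0 'a) \<Rightarrow> (optree \<Rightarrow>\<^sub>0 'a)" where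
  "fsc a f = (\<Sum>t\<in>Poly_Mapping.keys f. Poly_Mapping.single t (a * Poly_Mapping.lookup f t))"

definition fcomp :: "nat \<Rightarrow> (optree \<Rightarrow>\<^sub>0 'a::comm_ring_1) \<Rightarrow> (optree \<Rightarrow>\<^sub>0 'a) \<Rightarrow> (optree \<Rightarrow>\<^sub>0 'a)" where
  "fcomp i f g = (\<Sum>t\<in>Poly_Mapping.keys f. \<Sum>s\<in>Poly_Mapping.keys g.
       Poly_Mapping.single (graft i t s) (Poly_Mapping.lookup f t * Poly_Mapping.lookup g s))"

text \<open>Relations: mu \<circ>_1 mu - mu \<circ>_2 mu, and
  D \<circ>_1 mu - mu \<circ>_1 D - mu \<circ>_2 D - lambda (mu \<circ>_1 D) \<circ>_2 D.\<close>
definition rel_assoc :: "optree \<Rightarrow>\<^sub>0 'a::comm_ring_1" where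
  "rel_assoc = ft (Mu (Mu Leaf Leaf) Leaf) - ft (Mu Leaf (Mu Leaf Leaf))"

definition rel_der :: "'a::comm_ring_1 \<Rightarrow> optree \<Rightarrow>\<^sub>0 'a" where
  "rel_der lam = ft (Dn (Mu Leaf Leaf)) - ft (Mu (Dn Leaf) Leaf) - ft (Mu Leaf (Dn Leaf))
                 - fsc lam (ft (Mu (Dn Leaf) (Dn Leaf)))"

text \<open>The operadic ideal generated by the relations (pairs (arity, element)).\<close>
inductive_set asder_ideal :: "'a::comm_ring_1 \<Rightarrow> (nat \<times> (optree \<Rightarrow>\<^sub>0 'a)) set"
  for lam :: 'a where
  gen_assoc: "(3, rel_assoc) \<in> asder_ideal lam"
| gen_der: "(2, rel_der lam) \<in> asder_ideal lam"
| zero: "n \<ge> 1 \<Longrightarrow> (n, 0) \<in> asder_ideal lam"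
| add: "(n, f) \<in> asder_ideal lam \<Longrightarrow> (n, g) \<in> asder_ideal lam \<Longrightarrow> (n, f + g) \<in> asder_ideal lam"
| smul: "(n, f) \<in> asder_ideal lam \<Longrightarrow> (n, fsc a f) \<in> asder_ideal lam"
| comp_left: "(l, f) \<in> asder_ideal lam \<Longrightarrow> g \<in> Fc m \<Longrightarrow> 1 \<le> m \<Longrightarrow> 1 \<le> i \<Longrightarrow> i \<le> l \<Longrightarrow>
     (l + m - 1, fcomp i f g) \<in> asder_ideal lam"
| comp_right: "f \<in> Fc l \<Longrightarrow> (m, g) \<in> asder_ideal lam \<Longrightarrow> 1 \<le> i \<Longrightarrow> i \<le> l \<Longrightarrow>
     (l + m - 1, fcomp i f g) \<in> asder_ideal lam"

text \<open>The tree of the operation (a_1..a_n) \<mapsto> D^{j_1}(a_1) ... D^{j_n}(a_n).\<close>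
fun mprod :: "optree list \<Rightarrow> optree" where
  "mprod [] = Leaf"
| "mprod [t] = t"
| "mprod (t # ts) = Mu t (mprod ts)"

definition dmono_tree :: "nat list \<Rightarrow> optree" where
  "dmono_tree js = mprod (map (\<lambda>j. (Dn ^^ j) Leaf) js)"

end

theory Submission
  imports Defs
begin


lemma pconst_0[simp]: "pconst 0 = 0" by (simp add: pconst_def)
lemma pconst_1[simp]: "pconst 1 = 1" by (simp add: pconst_def)
lemma pconst_add: "pconst (a + b) = pconst a + pconst b" by (simp add: pconst_def single_add)
lemma pconst_mult: "pconst (a * b) = pconst a * pconst b" by (simp add: pconst_def mult_single)
lemma pconst_minus: "pconst (- a) = - pconst a" by (simp add: pconst_def single_uminus)

lemma sum_single_keys: "(\<Sum>a\<in>Poly_Mapping.keys p. Poly_Mapping.single a (Poly_Mapping.lookup p a)) = p"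
proof (rule poly_mapping_eqI)
  fix k
  show "Poly_Mapping.lookup (\<Sum>a\<in>Poly_Mapping.keys p. Poly_Mapping.single a (Poly_Mapping.lookup p a)) k = Poly_Mapping.lookup p k"
    by (cases "k \<in> Poly_Mapping.keys p")
       (auto simp: lookup_sum lookup_single when_def in_keys_iff sum.delta)
qed

lemma sum_single_superset:
  assumes "finite S" "Poly_Mapping.keys p \<subseteq> S"
  shows "(\<Sum>a\<in>S. Poly_Mapping.single a (Poly_Mapping.lookup p a)) = p"
proof -
  have "(\<Sum>a\<in>S. Poly_Mapping.single a (Poly_Mapping.lookup p a)) = (\<Sum>a\<in>Poly_Mapping.keys p. Poly_Mapping.single a (Poly_Mapping.lookup p a))"
    using assms by (intro sum.mono_neutral_right) (auto simp: in_keys_iff)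
  then show ?thesis by (simp add: sum_single_keys)
qed

definition ev :: "(nat \<Rightarrow> 'a::comm_ring_1 kpoly) \<Rightarrow> (nat \<Rightarrow>\<^sub>0 nat) \<Rightarrow> 'a kpoly" where
  "ev \<sigma> mon = (\<Prod>v\<in>Poly_Mapping.keys mon. \<sigma> v ^ Poly_Mapping.lookup mon v)"

lemma psubst_ev: "psubst \<sigma> p = (\<Sum>mon\<in>Poly_Mapping.keys p. pconst (Poly_Mapping.lookup p mon) * ev \<sigma> mon)"
  by (simp add: psubst_def ev_def)

lemma psubst_superset:
  assumes "finite S" "Poly_Mapping.keys p \<subseteq> S"
  shows "psubst \<sigma> p = (\<Sum>mon\<in>S. pconst (Poly_Mapping.lookup p mon) * ev \<sigma> mon)"
  unfolding psubst_ev using assms by (intro sum.mono_neutral_left) (auto simp: in_keys_iff)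

lemma ev_superset:
  assumes "finite S" "Poly_Mapping.keys mon \<subseteq> S"
  shows "ev \<sigma> mon = (\<Prod>v\<in>S. \<sigma> v ^ Poly_Mapping.lookup mon v)"
  unfolding ev_def using assms by (intro prod.mono_neutral_left) (auto simp: in_keys_iff)

lemma ev_add: "ev \<sigma> (a + b) = ev \<sigma> a * ev \<sigma> b"
proof -
  let ?S = "Poly_Mapping.keys a \<union> Poly_Mapping.keys b"
  have "ev \<sigma> (a + b) = (\<Prod>v\<in>?S. \<sigma> v ^ Poly_Mapping.lookup (a+b) v)"
    using keys_add[of a b] by (intro ev_superset) auto
  also have "\<dots> = (\<Prod>v\<in>?S. \<sigma> v ^ Poly_Mapping.lookup a v) * (\<Prod>v\<in>?S. \<sigma> v ^ Poly_Mapping.lookup b v)"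
    by (simp add: lookup_add power_add prod.distrib)
  also have "\<dots> = ev \<sigma> a * ev \<sigma> b"
    by (subst (1 2) ev_superset[of ?S]) auto
  finally show ?thesis .
qed

lemma ev_0[simp]: "ev \<sigma> 0 = 1" by (simp add: ev_def)

lemma ev_single: "ev \<sigma> (Poly_Mapping.single v e) = \<sigma> v ^ e"
  by (simp add: ev_def)

lemma psubst_0[simp]: "psubst \<sigma> 0 = 0" by (simp add: psubst_def)

lemma psubst_add: "psubst \<sigma> (p + q) = psubst \<sigma> p + psubst \<sigma> q"
proof -
  let ?S = "Poly_Mapping.keys p \<union> Poly_Mapping.keys q"
  have "psubst \<sigma> (p + q) = (\<Sum>mon\<in>?S. pconst (Poly_Mapping.lookup (p+q) mon) * ev \<sigma> mon)"
    using keys_add[of p q] by (intro psubst_superset) auto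
  also have "\<dots> = (\<Sum>mon\<in>?S. pconst (Poly_Mapping.lookup p mon) * ev \<sigma> mon) + (\<Sum>mon\<in>?S. pconst (Poly_Mapping.lookup q mon) * ev \<sigma> mon)"
    by (simp add: lookup_add pconst_add distrib_right sum.distrib)
  also have "\<dots> = psubst \<sigma> p + psubst \<sigma> q"
    by (subst (1 2) psubst_superset[of ?S]) auto
  finally show ?thesis .
qed

lemma psubst_single: "psubst \<sigma> (Poly_Mapping.single mon c) = pconst c * ev \<sigma> mon"
  by (subst psubst_superset[of "{mon}"]) auto

lemma psubst_uminus: "psubst \<sigma> (- p) = - psubst \<sigma> p"
proof -
  have "psubst \<sigma> p + psubst \<sigma> (- p) = 0" using psubst_add[of \<sigma> p "-p"] by simp
  then show ?thesis by (simp add: add_eq_0_iff)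
qed

lemma psubst_diff: "psubst \<sigma> (p - q) = psubst \<sigma> p - psubst \<sigma> q"
  using psubst_add[of \<sigma> p "-q"] by (simp add: psubst_uminus)

lemma psubst_sum: "psubst \<sigma> (sum f A) = (\<Sum>a\<in>A. psubst \<sigma> (f a))"
  by (induction A rule: infinite_finite_induct) (auto simp: psubst_add)

lemma psubst_mult: "psubst \<sigma> (p * q) = psubst \<sigma> p * psubst \<sigma> q"
proof -
  have "p * q = (\<Sum>a\<in>Poly_Mapping.keys p. Poly_Mapping.single a (Poly_Mapping.lookup p a)) *
     (\<Sum>b\<in>Poly_Mapping.keys q. Poly_Mapping.single b (Poly_Mapping.lookup q b))"
    by (simp add: sum_single_keys)
  also have "\<dots> = (\<Sum>a\<in>Poly_Mapping.keys p. \<Sum>b\<in>Poly_Mapping.keys q.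
        Poly_Mapping.single (a + b) (Poly_Mapping.lookup p a * Poly_Mapping.lookup q b))"
    by (simp add: sum_distrib_left sum_distrib_right mult_single) (rule sum.swap)
  finally have "psubst \<sigma> (p * q) = (\<Sum>a\<in>Poly_Mapping.keys p. \<Sum>b\<in>Poly_Mapping.keys q.
        pconst (Poly_Mapping.lookup p a) * ev \<sigma> a * (pconst (Poly_Mapping.lookup q b) * ev \<sigma> b))"
    by (simp add: psubst_sum psubst_single ev_add pconst_mult mult_ac)
  also have "\<dots> = psubst \<sigma> p * psubst \<sigma> q"
    by (simp add: psubst_ev sum_distrib_left sum_distrib_right) (rule sum.swap)
  finally show ?thesis .
qed

lemma psubst_pconst[simp]: "psubst \<sigma> (pconst c) = pconst c"
  by (simp add: pconst_def psubst_single)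

lemma psubst_1[simp]: "psubst \<sigma> 1 = 1"
  using psubst_pconst[of \<sigma> 1] by simp

lemma psubst_Xv[simp]: "psubst \<sigma> (Xv k) = \<sigma> k"
  by (simp add: Xv_def psubst_single ev_single)

lemma psubst_power: "psubst \<sigma> (p ^ n) = psubst \<sigma> p ^ n"
  by (induction n) (auto simp: psubst_mult)

lemma psubst_prod: "psubst \<sigma> (prod f A) = (\<Prod>a\<in>A. psubst \<sigma> (f a))"
  by (induction A rule: infinite_finite_induct) (auto simp: psubst_mult)

lemma qsc_pconst: "qsc c p = pconst c * p" by (simp add: qsc_def)

lemma psubst_qsc: "psubst \<sigma> (pconst c * p) = pconst c * psubst \<sigma> p"
  by (simp add: psubst_mult)

lemma psubst_comp: "psubst \<sigma> (psubst \<tau> p) = psubst (\<lambda>v. psubst \<sigma> (\<tau> v)) p"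
proof -
  have "psubst \<sigma> (psubst \<tau> p) = (\<Sum>mon\<in>Poly_Mapping.keys p. pconst (Poly_Mapping.lookup p mon) *
      (\<Prod>v\<in>Poly_Mapping.keys mon. psubst \<sigma> (\<tau> v) ^ Poly_Mapping.lookup mon v))"
    by (simp only: psubst_ev[of \<tau>] ev_def psubst_sum psubst_mult psubst_pconst psubst_prod psubst_power)
  then show ?thesis by (simp only: psubst_ev[of "\<lambda>v. psubst \<sigma> (\<tau> v)"] ev_def)
qed

lemma Xv_power: "Xv v ^ e = Poly_Mapping.single (Poly_Mapping.single v e) 1"
  by (induction e) (auto simp: Xv_def mult_single single_add[symmetric] add.commute)

lemma prod_singles: "(\<Prod>v\<in>A. Poly_Mapping.single (f v) (1::'a::comm_ring_1)) = Poly_Mapping.single (\<Sum>v\<in>A. f v) 1"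
  by (induction A rule: infinite_finite_induct) (auto simp: mult_single)

lemma ev_Xv: "ev Xv mon = Poly_Mapping.single mon 1"
  by (simp add: ev_def Xv_power prod_singles sum_single_keys)

lemma psubst_id[simp]: "psubst Xv p = p"
proof -
  have "psubst Xv p = (\<Sum>mon\<in>Poly_Mapping.keys p. Poly_Mapping.single mon (Poly_Mapping.lookup p mon))"
    by (simp add: psubst_ev ev_Xv pconst_def mult_single)
  then show ?thesis by (simp add: sum_single_keys)
qed

lemma psubst_id'[simp]: "psubst (\<lambda>v. Xv v) p = p"
  using psubst_id by (metis eta_contract_eq)

definition vars :: "'a::comm_ring_1 kpoly \<Rightarrow> nat set" where
  "vars p = (\<Union>m\<in>Poly_Mapping.keys p. Poly_Mapping.keys m)"

lemma psubst_cong: "(\<And>v. v \<in> vars p \<Longrightarrow> \<sigma> v = \<sigma>' v) \<Longrightarrow> psubst \<sigma> p = psubst \<sigma>' p"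
  unfolding psubst_def vars_def by (intro sum.cong refl arg_cong2[where f="(*)"] prod.cong) (metis UN_I)

lemma Qc_vars: "Qc n = {p. vars p \<subseteq> {1..n}}"
  by (auto simp: Qc_def vars_def)



lemma vars_0[simp]: "vars 0 = {}" by (simp add: vars_def)
lemma vars_pconst[simp]: "vars (pconst c) = {}" by (simp add: vars_def pconst_def)
lemma vars_1[simp]: "vars 1 = {}" by (simp add: vars_def)
lemma vars_Xv: "vars (Xv k) \<subseteq> {k}" by (simp add: vars_def Xv_def)
lemma vars_add: "vars (p + q) \<subseteq> vars p \<union> vars q"
  using keys_add[of p q] by (auto simp: vars_def)
lemma vars_uminus[simp]: "vars (- p) = vars p"
  by (simp add: vars_def)
lemma vars_diff: "vars (p - q) \<subseteq> vars p \<union> vars q"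
  using vars_add[of p "-q"] by simp
lemma vars_mult: "vars (p * q) \<subseteq> vars p \<union> vars q"
proof
  fix v assume "v \<in> vars (p * q)"
  then obtain m where m: "m \<in> Poly_Mapping.keys (p * q)" "v \<in> Poly_Mapping.keys m" by (auto simp: vars_def)
  then obtain a b where ab: "m = a + b" "a \<in> Poly_Mapping.keys p" "b \<in> Poly_Mapping.keys q"
    using keys_mult[of p q] by blast
  then have "v \<in> Poly_Mapping.keys a \<union> Poly_Mapping.keys b" using m keys_add[of a b] by auto
  then show "v \<in> vars p \<union> vars q" using ab by (auto simp: vars_def)
qed
lemma vars_sum: "vars (sum f A) \<subseteq> (\<Union>a\<in>A. vars (f a))"
  by (induction A rule: infinite_finite_induct) (use vars_add in fastforce)+
lemma vars_prod: "vars (prod f A) \<subseteq> (\<Union>a\<in>A. vars (f a))"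
  by (induction A rule: infinite_finite_induct) (use vars_mult in fastforce)+
lemma vars_power: "vars (p ^ n) \<subseteq> vars p"
  by (induction n) (use vars_mult in fastforce)+

lemma vars_psubst: "vars (psubst \<sigma> p) \<subseteq> (\<Union>v\<in>vars p. vars (\<sigma> v))"
proof -
  have "vars (psubst \<sigma> p) \<subseteq> (\<Union>mon\<in>Poly_Mapping.keys p. vars (pconst (Poly_Mapping.lookup p mon) * ev \<sigma> mon))"
    unfolding psubst_ev by (rule vars_sum)
  also have "\<dots> \<subseteq> (\<Union>v\<in>vars p. vars (\<sigma> v))"
  proof (intro UN_least)
    fix mon assume mon: "mon \<in> Poly_Mapping.keys p"
    have "vars (pconst (Poly_Mapping.lookup p mon) * ev \<sigma> mon) \<subseteq> vars (ev \<sigma> mon)"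
      using vars_mult by fastforce
    also have "\<dots> \<subseteq> (\<Union>v\<in>Poly_Mapping.keys mon. vars (\<sigma> v ^ Poly_Mapping.lookup mon v))"
      unfolding ev_def by (rule vars_prod)
    also have "\<dots> \<subseteq> (\<Union>v\<in>vars p. vars (\<sigma> v))"
      using vars_power mon by (fastforce simp: vars_def)
    finally show "vars (pconst (Poly_Mapping.lookup p mon) * ev \<sigma> mon) \<subseteq> (\<Union>v\<in>vars p. vars (\<sigma> v))" .
  qed
  finally show ?thesis .
qed

lemma Qc_iff: "p \<in> Qc n \<longleftrightarrow> vars p \<subseteq> {1..n}" by (simp add: Qc_vars)

lemma Qc_add: "p \<in> Qc n \<Longrightarrow> q \<in> Qc n \<Longrightarrow> p + q \<in> Qc n"
  using vars_add[of p q] by (auto simp: Qc_iff)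
lemma Qc_mult: "p \<in> Qc n \<Longrightarrow> q \<in> Qc n \<Longrightarrow> p * q \<in> Qc n"
  using vars_mult[of p q] by (auto simp: Qc_iff)
lemma Qc_pconst: "pconst c \<in> Qc n" by (simp add: Qc_iff)
lemma Qc_0: "0 \<in> Qc n" by (simp add: Qc_iff)
lemma Qc_1: "1 \<in> Qc n" by (simp add: Qc_iff)
lemma Qc_Xv: "1 \<le> k \<Longrightarrow> k \<le> n \<Longrightarrow> Xv k \<in> Qc n" using vars_Xv[of k] by (auto simp: Qc_iff)
lemma Qc_mono: "p \<in> Qc n \<Longrightarrow> n \<le> n' \<Longrightarrow> p \<in> Qc n'" by (auto simp: Qc_iff)
lemma Qc_psubst: "(\<And>v. v \<in> vars p \<Longrightarrow> \<sigma> v \<in> Qc N) \<Longrightarrow> psubst \<sigma> p \<in> Qc N"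
  using vars_psubst[of \<sigma> p] by (fastforce simp: Qc_iff)

section \<open>Theta\<close>

definition Tset :: "'a::comm_ring_1 \<Rightarrow> nat set \<Rightarrow> 'a kpoly" where
  "Tset lam S = (\<Sum>k=1..card S. pconst (lam ^ (k - 1)) * esym S k)"

lemma theta_Tset: "theta lam i m = Tset lam {i..<i+m}"
  by (simp add: theta_def Tset_def)

lemma esym_0: "finite A \<Longrightarrow> esym A 0 = 1"
proof -
  assume A: "finite A"
  have "{S. S \<subseteq> A \<and> card S = 0} = {{}}"
  proof (intro equalityI subsetI)
    fix S assume "S \<in> {S. S \<subseteq> A \<and> card S = 0}"
    then have "S \<subseteq> A" "card S = 0" by auto
    moreover have "finite S" using \<open>S \<subseteq> A\<close> A by (rule finite_subset)
    ultimately show "S \<in> {{}}" by simp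
  qed simp
  then show ?thesis unfolding esym_def by simp
qed
lemma esym_big: "finite A \<Longrightarrow> card A < k \<Longrightarrow> esym A k = 0"
proof -
  assume A: "finite A" "card A < k"
  have "{S. S \<subseteq> A \<and> card S = k} = {}"
  proof (intro equalityI subsetI)
    fix S assume "S \<in> {S. S \<subseteq> A \<and> card S = k}"
    then have "S \<subseteq> A" "card S = k" by auto
    then have "card S \<le> card A" using A(1) card_mono by blast
    then show "S \<in> {}" using A(2) \<open>card S = k\<close> by simp
  qed simp
  then show ?thesis unfolding esym_def by (metis sum.empty)
qed

lemma esym_insert:
  assumes "finite A" "a \<notin> A" "1 \<le> k"
  shows "esym (insert a A) k = esym A k + Xv a * esym A (k - 1)"
proof -
  have split: "{S. S \<subseteq> insert a A \<and> card S = k} = {S. S \<subseteq> A \<and> card S = k} \<union> insert a ` {S. S \<subseteq> A \<and> card S = k - 1}"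
  proof (intro equalityI subsetI)
    fix S assume S: "S \<in> {S. S \<subseteq> insert a A \<and> card S = k}"
    then have S1: "S \<subseteq> insert a A" and S2: "card S = k" by auto
    have fin: "finite S" using S1 assms(1) by (meson finite_insert finite_subset)
    show "S \<in> {S. S \<subseteq> A \<and> card S = k} \<union> insert a ` {S. S \<subseteq> A \<and> card S = k - 1}"
    proof (cases "a \<in> S")
      case True
      have e: "S = insert a (S - {a})" using True by (simp add: insert_absorb)
      have c: "card (S - {a}) = k - 1" using S2 True fin by (simp add: card_Diff_singleton)
      have s: "S - {a} \<subseteq> A" using S1 by blast
      have "S - {a} \<in> {S. S \<subseteq> A \<and> card S = k - 1}" using c s by simp
      then have "S \<in> insert a ` {S. S \<subseteq> A \<and> card S = k - 1}" using e by (intro image_eqI[where x="S - {a}"])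
      then show ?thesis by (rule UnI2)
    next
      case False
      then have "S \<subseteq> A" using S1 by blast
      then show ?thesis using S2 by simp
    qed
  next
    fix S assume "S \<in> {S. S \<subseteq> A \<and> card S = k} \<union> insert a ` {S. S \<subseteq> A \<and> card S = k - 1}"
    then show "S \<in> {S. S \<subseteq> insert a A \<and> card S = k}"
    proof
      assume "S \<in> insert a ` {S. S \<subseteq> A \<and> card S = k - 1}"
      then obtain S' where S': "S = insert a S'" "S' \<subseteq> A" "card S' = k - 1" by blast
      have f: "finite S'" using \<open>S' \<subseteq> A\<close> assms(1) by (rule finite_subset)
      have "a \<notin> S'" using S'(2) assms(2) by blast
      then have "card S = k" using S' f assms(3) by simp
      moreover have "S \<subseteq> insert a A" using S' by blast
      ultimately show ?thesis by simp
    next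
      assume "S \<in> {S. S \<subseteq> A \<and> card S = k}"
      then show ?thesis by blast
    qed
  qed
  have fin1: "finite {S. S \<subseteq> A \<and> card S = k}" using assms(1) by (simp add: finite_Collect_subsets)
  have fin2: "finite {S. S \<subseteq> A \<and> card S = k - 1}" using assms(1) by (simp add: finite_Collect_subsets)
  have disj: "{S. S \<subseteq> A \<and> card S = k} \<inter> insert a ` {S. S \<subseteq> A \<and> card S = k - 1} = {}"
    using assms(2) by blast
  have inj: "inj_on (insert a) {S. S \<subseteq> A \<and> card S = k - 1}"
  proof (rule inj_onI)
    fix X Y assume "X \<in> {S. S \<subseteq> A \<and> card S = k - 1}" "Y \<in> {S. S \<subseteq> A \<and> card S = k - 1}" "insert a X = insert a Y"
    then have "a \<notin> X" "a \<notin> Y" using assms(2) by auto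
    then show "X = Y" using \<open>insert a X = insert a Y\<close> by (metis Diff_insert_absorb)
  qed
  have "esym (insert a A) k = (\<Sum>S\<in>{S. S \<subseteq> A \<and> card S = k}. \<Prod>j\<in>S. Xv j) +
        (\<Sum>S\<in>insert a ` {S. S \<subseteq> A \<and> card S = k - 1}. \<Prod>j\<in>S. Xv j)"
    unfolding esym_def split using fin1 fin2 disj by (simp add: sum.union_disjoint)
  also have "(\<Sum>S\<in>insert a ` {S. S \<subseteq> A \<and> card S = k - 1}. \<Prod>j\<in>S. Xv j) =
      (\<Sum>S\<in>{S. S \<subseteq> A \<and> card S = k - 1}. \<Prod>j\<in>insert a S. Xv j)"
    using inj by (simp add: sum.reindex)
  also have "\<dots> = (\<Sum>S\<in>{S. S \<subseteq> A \<and> card S = k - 1}. Xv a * (\<Prod>j\<in>S. Xv j))"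
  proof (rule sum.cong[OF refl])
    fix S assume S: "S \<in> {S. S \<subseteq> A \<and> card S = k - 1}"
    then have "finite S" using assms(1) finite_subset by blast
    moreover have "a \<notin> S" using S assms(2) by blast
    ultimately show "(\<Prod>j\<in>insert a S. Xv j) = Xv a * (\<Prod>j\<in>S. Xv j)" by simp
  qed
  finally show ?thesis by (simp add: esym_def sum_distrib_left)
qed
lemma Tset_empty[simp]: "Tset lam {} = 0" by (simp add: Tset_def)

lemma Tset_insert:
  assumes "finite A" "a \<notin> A"
  shows "Tset lam (insert a A) = Tset lam A + Xv a + pconst lam * Tset lam A * Xv a"
proof -
  let ?n = "card A"
  let ?c = "\<lambda>k. pconst (lam ^ (k - 1))"
  have "Tset lam (insert a A) = (\<Sum>k=1..Suc ?n. ?c k * (esym A k + Xv a * esym A (k - 1)))"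
    unfolding Tset_def using assms by (simp add: esym_insert)
  also have "\<dots> = (\<Sum>k=1..Suc ?n. ?c k * esym A k) + Xv a * (\<Sum>k=1..Suc ?n. ?c k * esym A (k - 1))"
    by (simp add: distrib_left sum.distrib sum_distrib_left mult_ac)
  also have "(\<Sum>k=1..Suc ?n. ?c k * esym A k) = Tset lam A"
    unfolding Tset_def using assms by (simp add: esym_big)
  also have "(\<Sum>k=1..Suc ?n. ?c k * esym A (k - 1)) = (\<Sum>k=0..?n. ?c (Suc k) * esym A k)"
    using sum.shift_bounds_cl_Suc_ivl[of "\<lambda>k. ?c k * esym A (k - 1)" 0 ?n] by simp
  also have "\<dots> = ?c 1 * esym A 0 + (\<Sum>k=1..?n. ?c (Suc k) * esym A k)"
    by (subst sum.atLeast_Suc_atMost) auto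
  also have "(\<Sum>k=1..?n. ?c (Suc k) * esym A k) = pconst lam * Tset lam A"
    unfolding Tset_def sum_distrib_left
  proof (rule sum.cong[OF refl])
    fix k assume "k \<in> {1..?n}"
    then have "lam ^ (Suc k - 1) = lam * lam ^ (k - 1)" by (cases k) auto
    then show "?c (Suc k) * esym A k = pconst lam * (?c k * esym A k)"
      by (simp add: pconst_mult mult_ac)
  qed
  also have "?c 1 * esym A 0 = 1" using assms by (simp add: esym_0)
  finally have "Tset lam (insert a A) = Tset lam A + Xv a * (1 + pconst lam * Tset lam A)" .
  then show ?thesis by (simp add: distrib_left ac_simps)
qed

lemma Tset_single: "Tset lam {a} = Xv a"
  using Tset_insert[of "{}" a lam] by simp

lemma ring_id1: "(a::'b::comm_ring_1) + b + l*a*b + x + l*(a + b + l*a*b)*x = a + (b + x + l*b*x) + l*a*(b + x + l*b*x)"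
  by (simp add: algebra_simps)

lemma vars_add_le: "vars p \<subseteq> A \<Longrightarrow> vars q \<subseteq> A \<Longrightarrow> vars (p + q) \<subseteq> A"
  using vars_add[of p q] by blast
lemma vars_mult_le: "vars p \<subseteq> A \<Longrightarrow> vars q \<subseteq> A \<Longrightarrow> vars (p * q) \<subseteq> A"
  using vars_mult[of p q] by blast
lemma vars_Xv_le: "k \<in> A \<Longrightarrow> vars (Xv k) \<subseteq> A"
  using vars_Xv[of k] by blast
lemma vars_pconst_le: "vars (pconst c) \<subseteq> A" by simp

lemma Tset_union:
  assumes "finite A" "finite B" "A \<inter> B = {}"
  shows "Tset lam (A \<union> B) = Tset lam A + Tset lam B + pconst lam * Tset lam A * Tset lam B"
  using assms(2,3)
proof (induction B rule: finite_induct)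
  case empty then show ?case by simp
next
  case (insert b B)
  have "Tset lam (A \<union> insert b B) = Tset lam (insert b (A \<union> B))" by simp
  also have "\<dots> = Tset lam (A \<union> B) + Xv b + pconst lam * Tset lam (A \<union> B) * Xv b"
    using insert assms by (intro Tset_insert) auto
  also have "Tset lam (A \<union> B) = Tset lam A + Tset lam B + pconst lam * Tset lam A * Tset lam B"
    using insert by auto
  finally have calc: "Tset lam (A \<union> insert b B) = Tset lam A + Tset lam B + pconst lam * Tset lam A * Tset lam B + Xv b +
     pconst lam * (Tset lam A + Tset lam B + pconst lam * Tset lam A * Tset lam B) * Xv b" .
  have ib: "Tset lam (insert b B) = Tset lam B + Xv b + pconst lam * Tset lam B * Xv b"
    using insert by (intro Tset_insert) auto
  show ?case unfolding ib calc by (rule ring_id1)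
qed

lemma Tset_rename:
  assumes "finite A" "inj_on g A" "\<And>v. v \<in> A \<Longrightarrow> \<sigma> v = Xv (g v)"
  shows "psubst \<sigma> (Tset lam A) = Tset lam (g ` A)"
  using assms
proof (induction A rule: finite_induct)
  case empty then show ?case by simp
next
  case (insert x F)
  then have "g x \<notin> g ` F" by auto
  then show ?case using insert
    by (simp add: Tset_insert psubst_add psubst_mult)
qed

lemma vars_Tset: "finite A \<Longrightarrow> vars (Tset lam A) \<subseteq> A"
proof (induction A rule: finite_induct)
  case empty then show ?case by simp
next
  case (insert x F)
  have "vars (Tset lam F + Xv x + pconst lam * Tset lam F * Xv x) \<subseteq> insert x F"
    using insert(3) by (intro vars_add_le vars_mult_le vars_Xv_le vars_pconst_le; auto)
  then show ?case by (simp only: Tset_insert[OF insert(1,2)])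
qed

lemma Tset_subst:
  assumes "finite S" "a \<in> S" "inj_on g (S - {a})" "finite B" "B \<inter> g ` (S - {a}) = {}"
    "\<And>v. v \<in> S - {a} \<Longrightarrow> \<sigma> v = Xv (g v)" "\<sigma> a = Tset lam B"
  shows "psubst \<sigma> (Tset lam S) = Tset lam (g ` (S - {a}) \<union> B)"
proof -
  have "S = insert a (S - {a})" using assms by auto
  then have "Tset lam S = Tset lam (S - {a}) + Xv a + pconst lam * Tset lam (S - {a}) * Xv a"
  proof -
    have "Tset lam (insert a (S - {a})) = Tset lam (S - {a}) + Xv a + pconst lam * Tset lam (S - {a}) * Xv a"
      using assms(1) by (intro Tset_insert) auto
    then show ?thesis using insert_Diff[OF assms(2)] by simp
  qed
  then have "psubst \<sigma> (Tset lam S) = Tset lam (g ` (S - {a})) + Tset lam B + pconst lam * Tset lam (g ` (S - {a})) * Tset lam B"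
    using assms Tset_rename[of "S - {a}" g \<sigma> lam] by (simp add: psubst_add psubst_mult)
  also have "\<dots> = Tset lam (g ` (S - {a}) \<union> B)"
    using assms by (subst Tset_union) auto
  finally show ?thesis .
qed



lemma theta_shift:
  assumes "\<And>w. i \<le> w \<Longrightarrow> w < i + m \<Longrightarrow> \<sigma> w = Xv (w + c)"
  shows "psubst \<sigma> (theta lam i m) = theta lam (i + c) m"
proof -
  have "psubst \<sigma> (Tset lam {i..<i+m}) = Tset lam ((\<lambda>w. w + c) ` {i..<i+m})"
    using assms by (intro Tset_rename) (auto simp: inj_on_def)
  also have "(\<lambda>w. w + c) ` {i..<i+m} = {i+c..<i+c+m}"
    by (simp add: add.commute add.left_commute)
  finally show ?thesis by (simp add: theta_Tset)
qed

lemma theta_nest: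
  assumes ia: "i \<le> a" "a < i + m" and k: "1 \<le> k"
    and s1: "\<And>w. i \<le> w \<Longrightarrow> w < a \<Longrightarrow> \<sigma> w = Xv w"
    and s2: "\<sigma> a = theta lam a k"
    and s3: "\<And>w. a < w \<Longrightarrow> w < i + m \<Longrightarrow> \<sigma> w = Xv (w + k - 1)"
  shows "psubst \<sigma> (theta lam i m) = theta lam i (m + k - 1)"
proof -
  define g where "g w = (if w < a then w else w + k - 1)" for w
  let ?S = "{i..<i+m}"
  have img: "g ` (?S - {a}) \<union> {a..<a+k} = {i..<i + (m + k - 1)}"
  proof (intro equalityI subsetI)
    fix w assume "w \<in> g ` (?S - {a}) \<union> {a..<a+k}"
    then show "w \<in> {i..<i + (m + k - 1)}" using ia k by (auto simp: g_def)
  next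
    fix w assume w: "w \<in> {i..<i + (m + k - 1)}"
    show "w \<in> g ` (?S - {a}) \<union> {a..<a+k}"
    proof (cases "w < a")
      case True
      then have "g w = w" by (simp add: g_def)
      then have "w \<in> g ` (?S - {a})" using True w ia by (intro rev_image_eqI[of w]) auto
      then show ?thesis by blast
    next
      case False
      show ?thesis
      proof (cases "w < a + k")
        case True then show ?thesis using False by auto
      next
        case False2: False
        have "g (w + 1 - k) = w" using False2 k by (simp add: g_def)
        moreover have "w + 1 - k \<in> ?S - {a}" using False2 w k ia by auto
        ultimately show ?thesis by (metis UnI1 image_eqI)
      qed
    qed
  qed
  have "psubst \<sigma> (Tset lam ?S) = Tset lam (g ` (?S - {a}) \<union> {a..<a+k})"
  proof (rule Tset_subst)
    show "inj_on g (?S - {a})" using k by (auto simp: inj_on_def g_def split: if_splits)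
    show "{a..<a + k} \<inter> g ` (?S - {a}) = {}" using k by (auto simp: g_def)
    show "\<And>v. v \<in> ?S - {a} \<Longrightarrow> \<sigma> v = Xv (g v)"
      using s1 s3 by (auto simp: g_def)
    show "\<sigma> a = Tset lam {a..<a + k}" using s2 by (simp add: theta_Tset)
  qed (use ia in auto)
  then show ?thesis using img by (simp add: theta_Tset)
qed

lemma Qc_Tset: "S \<subseteq> {1..n} \<Longrightarrow> finite S \<Longrightarrow> Tset lam S \<in> Qc n"
  using vars_Tset[of S lam] by (auto simp: Qc_iff)

lemma Qc_theta: "1 \<le> i \<Longrightarrow> i + m \<le> n + 1 \<Longrightarrow> theta lam i m \<in> Qc n"
  by (simp add: theta_Tset Qc_Tset subset_iff)

lemma qcomp_Qc:
  assumes "1 \<le> m" "1 \<le> i" "i \<le> n" "P \<in> Qc n" "Q \<in> Qc m"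
  shows "qcomp lam n m i P Q \<in> Qc (n + m - 1)"
  unfolding qcomp_def
proof (rule Qc_mult)
  show "psubst (\<lambda>j. if j < i then Xv j else if j = i then theta lam i m else Xv (j + m - 1)) P \<in> Qc (n + m - 1)"
  proof (rule Qc_psubst)
    fix v assume "v \<in> vars P"
    then have v: "1 \<le> v" "v \<le> n" using assms(4) by (auto simp: Qc_iff)
    show "(if v < i then Xv v else if v = i then theta lam i m else Xv (v + m - 1)) \<in> Qc (n + m - 1)"
      using v assms by (auto intro!: Qc_Xv Qc_theta)
  qed
  show "psubst (\<lambda>j. Xv (j + i - 1)) Q \<in> Qc (n + m - 1)"
  proof (rule Qc_psubst)
    fix v assume "v \<in> vars Q"
    then have v: "1 \<le> v" "v \<le> m" using assms(5) by (auto simp: Qc_iff)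
    show "Xv (v + i - 1) \<in> Qc (n + m - 1)" using v assms by (auto intro!: Qc_Xv)
  qed
qed

lemma Qc_varsD: "p \<in> Qc n \<Longrightarrow> v \<in> vars p \<Longrightarrow> 1 \<le> v \<and> v \<le> n"
  by (auto simp: Qc_iff)

lemma qcomp_seq:
  assumes i: "1 \<le> i" "i \<le> l" and j: "1 \<le> j" "j \<le> m" and k: "1 \<le> k"
    and x: "x \<in> Qc l" and y: "y \<in> Qc m" and z: "z \<in> Qc k"
  shows "qcomp lam (l + m - 1) k (i - 1 + j) (qcomp lam l m i x y) z =
         qcomp lam l (m + k - 1) i x (qcomp lam m k j y z)"
proof -
  define s1 where "s1 = (\<lambda>v. if v < i then Xv v else if v = i then theta lam i m else (Xv (v + m - 1) :: 'a kpoly))"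
  define s2 where "s2 = (\<lambda>v. if v < i - 1 + j then Xv v else if v = i - 1 + j then theta lam (i - 1 + j) k else (Xv (v + k - 1) :: 'a kpoly))"
  define s3 where "s3 = (\<lambda>v. if v < i then Xv v else if v = i then theta lam i (m + k - 1) else (Xv (v + (m + k - 1) - 1) :: 'a kpoly))"
  define s4 where "s4 = (\<lambda>v. if v < j then Xv v else if v = j then theta lam j k else (Xv (v + k - 1) :: 'a kpoly))"
  have L: "qcomp lam (l + m - 1) k (i - 1 + j) (qcomp lam l m i x y) z =
     psubst (\<lambda>v. psubst s2 (s1 v)) x * psubst (\<lambda>v. psubst s2 (Xv (v + i - 1))) y * psubst (\<lambda>v. Xv (v + (i - 1 + j) - 1)) z"
    unfolding qcomp_def s1_def[symmetric] s2_def[symmetric] by (simp add: psubst_mult psubst_comp)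
  have R: "qcomp lam l (m + k - 1) i x (qcomp lam m k j y z) =
     psubst s3 x * psubst (\<lambda>v. psubst (\<lambda>v. Xv (v + i - 1)) (s4 v)) y * psubst (\<lambda>v. psubst (\<lambda>v. Xv (v + i - 1)) (Xv (v + j - 1))) z"
    unfolding qcomp_def s3_def[symmetric] s4_def[symmetric] by (simp add: psubst_mult psubst_comp mult_ac)
  have ex: "psubst (\<lambda>v. psubst s2 (s1 v)) x = psubst s3 x"
  proof (rule psubst_cong)
    fix v assume "v \<in> vars x"
    then have v: "1 \<le> v" "v \<le> l" using Qc_varsD[OF x] by auto
    show "psubst s2 (s1 v) = s3 v"
    proof (cases "v < i")
      case True
      then have "v < i - 1 + j" using j by linarith
      then show ?thesis using True by (simp add: s1_def s2_def s3_def)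
    next
      case False
      show ?thesis
      proof (cases "v = i")
        case True
        have "psubst s2 (theta lam i m) = theta lam i (m + k - 1)"
          by (rule theta_nest[where a="i - 1 + j"]) (use i j k in \<open>auto simp: s2_def\<close>)
        then show ?thesis using True by (simp add: s1_def s3_def)
      next
        case False2: False
        have "i - 1 + j < v + m - 1" "v > i" using False False2 i j by linarith+
        then show ?thesis using k by (simp add: s1_def s2_def s3_def add.assoc)
      qed
    qed
  qed
  have ey: "psubst (\<lambda>v. psubst s2 (Xv (v + i - 1))) y = psubst (\<lambda>v. psubst (\<lambda>v. Xv (v + i - 1)) (s4 v)) y"
  proof (rule psubst_cong)
    fix v assume "v \<in> vars y"
    then have v: "1 \<le> v" "v \<le> m" using Qc_varsD[OF y] by auto
    show "psubst s2 (Xv (v + i - 1)) = psubst (\<lambda>v. Xv (v + i - 1)) (s4 v)"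
    proof (cases "v < j")
      case True then show ?thesis using i v by (simp add: s2_def s4_def)
    next
      case False
      show ?thesis
      proof (cases "v = j")
        case True
        have "psubst (\<lambda>v. Xv (v + i - 1)) (theta lam j k) = theta lam (j + (i - 1)) k"
          by (rule theta_shift) (use i in auto)
        then show ?thesis using True i by (simp add: s2_def s4_def add.commute)
      next
        case False2: False
        have "i - 1 + j < v + i - 1" "v > j" "v + i - 1 + k - 1 = v + k - 1 + i - 1" using False False2 i j k by linarith+
        then show ?thesis by (simp add: s2_def s4_def)
      qed
    qed
  qed
  have ez: "psubst (\<lambda>v. Xv (v + (i - 1 + j) - 1)) z = psubst (\<lambda>v. psubst (\<lambda>v. Xv (v + i - 1)) (Xv (v + j - 1))) z"
  proof (rule psubst_cong)
    fix v assume "v \<in> vars z"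
    then have v: "1 \<le> v" using Qc_varsD[OF z] by auto
    show "Xv (v + (i - 1 + j) - 1) = psubst (\<lambda>v. Xv (v + i - 1)) (Xv (v + j - 1))"
      using i j v by (simp add: add.commute add.left_commute)
  qed
  show ?thesis unfolding L R ex ey ez by simp
qed



lemma qcomp_par:
  assumes i: "1 \<le> i" "i < j" "j \<le> l" and m: "1 \<le> m" and k: "1 \<le> k"
    and x: "x \<in> Qc l" and y: "y \<in> Qc m" and z: "z \<in> Qc k"
  shows "qcomp lam (l + m - 1) k (j + m - 1) (qcomp lam l m i x y) z =
         qcomp lam (l + k - 1) m i (qcomp lam l k j x z) y"
proof -
  define s1 where "s1 = (\<lambda>v. if v < i then Xv v else if v = i then theta lam i m else (Xv (v + m - 1) :: 'a kpoly))"
  define s2 where "s2 = (\<lambda>v. if v < j + m - 1 then Xv v else if v = j + m - 1 then theta lam (j + m - 1) k else (Xv (v + k - 1) :: 'a kpoly))"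
  define s3 where "s3 = (\<lambda>v. if v < j then Xv v else if v = j then theta lam j k else (Xv (v + k - 1) :: 'a kpoly))"
  have L: "qcomp lam (l + m - 1) k (j + m - 1) (qcomp lam l m i x y) z =
     psubst (\<lambda>v. psubst s2 (s1 v)) x * psubst (\<lambda>v. psubst s2 (Xv (v + i - 1))) y * psubst (\<lambda>v. Xv (v + (j + m - 1) - 1)) z"
    unfolding qcomp_def s1_def[symmetric] s2_def[symmetric] by (simp add: psubst_mult psubst_comp)
  have R: "qcomp lam (l + k - 1) m i (qcomp lam l k j x z) y =
     psubst (\<lambda>v. psubst s1 (s3 v)) x * psubst (\<lambda>v. Xv (v + i - 1)) y * psubst (\<lambda>v. psubst s1 (Xv (v + j - 1))) z"
    unfolding qcomp_def s1_def[symmetric] s3_def[symmetric] by (simp add: psubst_mult psubst_comp mult_ac)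
  have ex: "psubst (\<lambda>v. psubst s2 (s1 v)) x = psubst (\<lambda>v. psubst s1 (s3 v)) x"
  proof (rule psubst_cong)
    fix v assume "v \<in> vars x"
    then have v: "1 \<le> v" "v \<le> l" using Qc_varsD[OF x] by auto
    show "psubst s2 (s1 v) = psubst s1 (s3 v)"
    proof (cases "v < i")
      case True
      then have "v < j + m - 1" "v < j" using i m by linarith+
      then show ?thesis using True by (simp add: s1_def s2_def s3_def)
    next
      case False
      show ?thesis
      proof (cases "v = i")
        case True
        have "psubst s2 (theta lam i m) = theta lam (i + 0) m"
          by (rule theta_shift) (use i m in \<open>auto simp: s2_def\<close>)
        moreover have "v < j" using True i by linarith
        ultimately show ?thesis using True by (simp add: s1_def s3_def)
      next
        case False2: False
        show ?thesis
        proof (cases "v < j")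
          case True
          have "v + m - 1 < j + m - 1" "v > i" using True False False2 m by linarith+
          then show ?thesis using True by (simp add: s1_def s2_def s3_def)
        next
          case False3: False
          show ?thesis
          proof (cases "v = j")
            case True
            have "psubst s1 (theta lam j k) = theta lam (j + (m - 1)) k"
              by (rule theta_shift) (use i m in \<open>auto simp: s1_def\<close>)
            moreover have "v > i" using True i by linarith
            ultimately show ?thesis using True m by (simp add: s1_def s2_def s3_def)
          next
            case False4: False
            have "v > j" "v > i" "v + m - 1 > j + m - 1" "v + k - 1 > i" "v + m - 1 + k - 1 = v + k - 1 + m - 1"
              using False3 False4 i m k by linarith+
            then have a: "s1 v = Xv (v + m - 1)" "s2 (v + m - 1) = Xv (v + m - 1 + k - 1)"
              "s3 v = Xv (v + k - 1)" "s1 (v + k - 1) = Xv (v + k - 1 + m - 1)"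
              by (simp_all add: s1_def s2_def s3_def)
            show ?thesis by (simp only: a psubst_Xv) (rule arg_cong[where f=Xv], use \<open>v > j\<close> i m k in linarith)
          qed
        qed
      qed
    qed
  qed
  have ey: "psubst (\<lambda>v. psubst s2 (Xv (v + i - 1))) y = psubst (\<lambda>v. Xv (v + i - 1)) y"
  proof (rule psubst_cong)
    fix v assume "v \<in> vars y"
    then have v: "1 \<le> v" "v \<le> m" using Qc_varsD[OF y] by auto
    then have "v + i - 1 < j + m - 1" using i by linarith
    then show "psubst s2 (Xv (v + i - 1)) = Xv (v + i - 1)" by (simp add: s2_def)
  qed
  have ez: "psubst (\<lambda>v. Xv (v + (j + m - 1) - 1)) z = psubst (\<lambda>v. psubst s1 (Xv (v + j - 1))) z"
  proof (rule psubst_cong)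
    fix v assume "v \<in> vars z"
    then have v: "1 \<le> v" using Qc_varsD[OF z] by auto
    then have "v + j - 1 > i" "v + (j + m - 1) - 1 = v + j - 1 + m - 1" using i m by linarith+
    then show "Xv (v + (j + m - 1) - 1) = psubst s1 (Xv (v + j - 1))" by (simp add: s1_def add.assoc)
  qed
  show ?thesis unfolding L R ex ey ez by (simp add: mult_ac)
qed

lemma theta_1: "theta lam i 1 = Xv i"
  by (simp add: theta_Tset Tset_single)

lemma Qc_qsc: "x \<in> Qc n \<Longrightarrow> qsc a x \<in> Qc n"
  by (simp add: qsc_def Qc_mult Qc_pconst)

lemma Q_operad: "ns_operad (Qc :: nat \<Rightarrow> 'a::comm_ring_1 kpoly set) qsc 1 (qcomp lam)"
  unfolding ns_operad_def
proof (intro conjI allI impI ballI)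
  show "(0::'a kpoly) \<in> Qc n" for n by (rule Qc_0)
  show "x + y \<in> Qc n" if "x \<in> Qc n" "y \<in> Qc n" for n and x y :: "'a kpoly" using that by (rule Qc_add)
  show "qsc a x \<in> Qc n" if "x \<in> Qc n" for n a and x :: "'a kpoly" using that by (rule Qc_qsc)
  show "qsc a (x + y) = qsc a x + qsc a y" for a and x y :: "'a kpoly" by (simp add: qsc_def distrib_left)
  show "qsc (a + b) x = qsc a x + qsc b x" for a b and x :: "'a kpoly" by (simp add: qsc_def pconst_add distrib_right)
  show "qsc (a * b) x = qsc a (qsc b x)" for a b and x :: "'a kpoly" by (simp add: qsc_def pconst_mult mult_ac)
  show "qsc 1 x = x" for x :: "'a kpoly" by (simp add: qsc_def)
  show "(1::'a kpoly) \<in> Qc 1" by (rule Qc_1)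
  show "qcomp lam n m i x y \<in> Qc (n + m - 1)" if "1 \<le> m" "1 \<le> i" "i \<le> n" "x \<in> Qc n" "y \<in> Qc m"
    for n m i and x y :: "'a kpoly" using that by (rule qcomp_Qc)
  show "qcomp lam n m i (x + x') y = qcomp lam n m i x y + qcomp lam n m i x' y" for n m i and x x' y :: "'a kpoly"
    by (simp add: qcomp_def psubst_add distrib_right)
  show "qcomp lam n m i x (y + y') = qcomp lam n m i x y + qcomp lam n m i x y'" for n m i and x y y' :: "'a kpoly"
    by (simp add: qcomp_def psubst_add distrib_left)
  show "qcomp lam n m i (qsc a x) y = qsc a (qcomp lam n m i x y)" for n m i a and x y :: "'a kpoly"
    by (simp add: qcomp_def qsc_def psubst_mult mult_ac)
  show "qcomp lam n m i x (qsc a y) = qsc a (qcomp lam n m i x y)" for n m i a and x y :: "'a kpoly"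
    by (simp add: qcomp_def qsc_def psubst_mult mult_ac)
  show "qcomp lam 1 n 1 1 x = x" for n and x :: "'a kpoly"
    by (simp add: qcomp_def)
  show "qcomp lam n 1 i x 1 = x" for n i and x :: "'a kpoly"
  proof -
    have "(\<lambda>j. if j < i then Xv j else if j = i then theta lam i 1 else Xv (j + 1 - 1)) = (Xv :: nat \<Rightarrow> 'a kpoly)"
      by (rule ext) (use theta_1[of lam i] in simp)
    then show ?thesis unfolding qcomp_def by (simp only: psubst_id psubst_1 mult_1_right)
  qed
  show "qcomp lam (l + m - 1) k (i - 1 + j) (qcomp lam l m i x y) z = qcomp lam l (m + k - 1) i x (qcomp lam m k j y z)"
    if "1 \<le> i" "i \<le> l" "1 \<le> j" "j \<le> m" "1 \<le> k" "x \<in> Qc l" "y \<in> Qc m" "z \<in> Qc k"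
    for l m k i j and x y z :: "'a kpoly" using that by (rule qcomp_seq)
  show "qcomp lam (l + m - 1) k (j + m - 1) (qcomp lam l m i x y) z = qcomp lam (l + k - 1) m i (qcomp lam l k j x z) y"
    if "1 \<le> i" "i < j" "j \<le> l" "1 \<le> m" "1 \<le> k" "x \<in> Qc l" "y \<in> Qc m" "z \<in> Qc k"
    for l m k i j and x y z :: "'a kpoly" using that by (rule qcomp_par)
qed



section \<open>Free operad side\<close>

lemma lookup_fsc[simp]: "Poly_Mapping.lookup (fsc a f) t = a * Poly_Mapping.lookup f t"
proof -
  have "Poly_Mapping.lookup (fsc a f) t = (\<Sum>t'\<in>Poly_Mapping.keys f. if t' = t then a * Poly_Mapping.lookup f t' else 0)"
    unfolding fsc_def lookup_sum by (intro sum.cong refl) (simp add: lookup_single when_def)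
  also have "\<dots> = a * Poly_Mapping.lookup f t"
    by (cases "t \<in> Poly_Mapping.keys f") (simp_all add: sum.delta' in_keys_iff)
  finally show ?thesis .
qed

lemma fsc_add: "fsc a (f + g) = fsc a f + fsc a g"
  by (rule poly_mapping_eqI) (simp add: lookup_add distrib_left)
lemma fsc_add2: "fsc (a + b) f = fsc a f + fsc b f"
  by (rule poly_mapping_eqI) (simp add: lookup_add distrib_right)
lemma fsc_zero[simp]: "fsc a 0 = 0"
  by (rule poly_mapping_eqI) simp
lemma fsc_minus: "fsc (-1) f = - f"
  by (rule poly_mapping_eqI) simp
lemma fsc_diff: "fsc a (f - g) = fsc a f - fsc a g"
  by (rule poly_mapping_eqI) (simp add: lookup_minus right_diff_distrib)
lemma fsc_single: "fsc a (Poly_Mapping.single t b) = Poly_Mapping.single t (a * b)"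
  by (rule poly_mapping_eqI) (simp add: lookup_single when_def)
lemma fsc_fsc: "fsc a (fsc b f) = fsc (a * b) f"
  by (rule poly_mapping_eqI) (simp add: mult_ac)
lemma keys_fsc: "Poly_Mapping.keys (fsc a f) \<subseteq> Poly_Mapping.keys f"
  by (auto simp: in_keys_iff)

lemma fcomp_superset:
  assumes "finite SA" "Poly_Mapping.keys f \<subseteq> SA" "finite SB" "Poly_Mapping.keys g \<subseteq> SB"
  shows "fcomp i f g = (\<Sum>t\<in>SA. \<Sum>s\<in>SB. Poly_Mapping.single (graft i t s) (Poly_Mapping.lookup f t * Poly_Mapping.lookup g s))"
proof -
  have "fcomp i f g = (\<Sum>t\<in>SA. \<Sum>s\<in>Poly_Mapping.keys g. Poly_Mapping.single (graft i t s) (Poly_Mapping.lookup f t * Poly_Mapping.lookup g s))"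
    unfolding fcomp_def using assms by (intro sum.mono_neutral_left) (auto simp: in_keys_iff)
  also have "\<dots> = (\<Sum>t\<in>SA. \<Sum>s\<in>SB. Poly_Mapping.single (graft i t s) (Poly_Mapping.lookup f t * Poly_Mapping.lookup g s))"
    using assms by (intro sum.cong refl sum.mono_neutral_left) (auto simp: in_keys_iff)
  finally show ?thesis .
qed

lemma fcomp_add_left: "fcomp i (f + f') g = fcomp i f g + fcomp i f' g"
proof -
  let ?S = "Poly_Mapping.keys f \<union> Poly_Mapping.keys f'"
  have k: "Poly_Mapping.keys (f + f') \<subseteq> ?S" by (rule keys_add)
  show ?thesis
    apply (subst (1 2 3) fcomp_superset[where SA = ?S and SB = "Poly_Mapping.keys g"])
    using k by (auto simp: lookup_add distrib_right single_add sum.distrib)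
qed

lemma fcomp_add_right: "fcomp i f (g + g') = fcomp i f g + fcomp i f g'"
proof -
  let ?S = "Poly_Mapping.keys g \<union> Poly_Mapping.keys g'"
  have k: "Poly_Mapping.keys (g + g') \<subseteq> ?S" by (rule keys_add)
  show ?thesis
    apply (subst (1 2 3) fcomp_superset[where SB = ?S and SA = "Poly_Mapping.keys f"])
    using k by (auto simp: lookup_add distrib_left single_add sum.distrib)
qed

lemma fcomp_fsc_left: "fcomp i (fsc a f) g = fsc a (fcomp i f g)"
proof -
  have "fcomp i (fsc a f) g = (\<Sum>t\<in>Poly_Mapping.keys f. \<Sum>s\<in>Poly_Mapping.keys g.
       Poly_Mapping.single (graft i t s) (a * Poly_Mapping.lookup f t * Poly_Mapping.lookup g s))"
    using keys_fsc by (subst fcomp_superset[where SA = "Poly_Mapping.keys f" and SB = "Poly_Mapping.keys g"]) (auto simp: mult_ac)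
  also have "\<dots> = fsc a (fcomp i f g)"
    unfolding fcomp_def
    by (rule poly_mapping_eqI) (simp add: lookup_sum sum_distrib_left lookup_single when_def mult_ac, intro sum.cong refl, simp)
  finally show ?thesis .
qed

lemma fcomp_fsc_right: "fcomp i f (fsc a g) = fsc a (fcomp i f g)"
proof -
  have "fcomp i f (fsc a g) = (\<Sum>t\<in>Poly_Mapping.keys f. \<Sum>s\<in>Poly_Mapping.keys g.
       Poly_Mapping.single (graft i t s) (a * Poly_Mapping.lookup f t * Poly_Mapping.lookup g s))"
    using keys_fsc by (subst fcomp_superset[where SA = "Poly_Mapping.keys f" and SB = "Poly_Mapping.keys g"]) (auto simp: mult_ac)
  also have "\<dots> = fsc a (fcomp i f g)"
    unfolding fcomp_def
    by (rule poly_mapping_eqI) (simp add: lookup_sum sum_distrib_left lookup_single when_def mult_ac, intro sum.cong refl, simp)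
  finally show ?thesis .
qed

lemma fcomp_zero_left[simp]: "fcomp i 0 g = 0" by (simp add: fcomp_def)
lemma fcomp_zero_right[simp]: "fcomp i f 0 = 0" by (simp add: fcomp_def)

lemma fcomp_diff_left: "fcomp i (f - f') g = fcomp i f g - fcomp i f' g"
  using fcomp_add_left[of i "f - f'" f' g] by (simp add: algebra_simps)
lemma fcomp_diff_right: "fcomp i f (g - g') = fcomp i f g - fcomp i f g'"
  using fcomp_add_right[of i f "g - g'" g'] by (simp add: algebra_simps)

lemma fcomp_single: "fcomp i (Poly_Mapping.single t a) (Poly_Mapping.single s b) = Poly_Mapping.single (graft i t s) (a * b)"
  by (subst fcomp_superset[where SA = "{t}" and SB = "{s}"]) auto

lemma fcomp_ft: "fcomp i (ft t) (ft s) = ft (graft i t s)"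
  by (simp add: ft_def fcomp_single)

lemma leaves_pos: "1 \<le> leaves t"
  by (induction t) auto

lemma leaves_graft: "1 \<le> i \<Longrightarrow> i \<le> leaves t \<Longrightarrow> leaves (graft i t s) = leaves t + leaves s - 1"
proof (induction t arbitrary: i)
  case Leaf then show ?case by simp
next
  case (Dn t) then show ?case by simp
next
  case (Mu t u)
  show ?case
  proof (cases "i \<le> leaves t")
    case True then show ?thesis using Mu leaves_pos[of s] by simp
  next
    case False then show ?thesis using Mu leaves_pos[of s] leaves_pos[of t] by simp
  qed
qed

lemma Fc_0: "0 \<in> Fc n" by (simp add: Fc_def)
lemma Fc_add: "f \<in> Fc n \<Longrightarrow> g \<in> Fc n \<Longrightarrow> f + g \<in> Fc n"
  using keys_add[of f g] by (auto simp: Fc_def)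
lemma Fc_fsc: "f \<in> Fc n \<Longrightarrow> fsc a f \<in> Fc n"
  using keys_fsc[of a f] by (auto simp: Fc_def)
lemma Fc_uminus: "f \<in> Fc n \<Longrightarrow> - f \<in> Fc n"
  by (simp add: Fc_def)
lemma Fc_diff: "f \<in> Fc n \<Longrightarrow> g \<in> Fc n \<Longrightarrow> f - g \<in> Fc n"
  using Fc_add[of f n "-g"] Fc_uminus[of g n] by simp
lemma Fc_single: "leaves t = n \<Longrightarrow> Poly_Mapping.single t a \<in> Fc n"
  by (simp add: Fc_def)
lemma Fc_ft: "leaves t = n \<Longrightarrow> ft t \<in> Fc n"
  by (simp add: ft_def Fc_single)
lemma Fc_sum: "(\<And>a. a \<in> A \<Longrightarrow> F a \<in> Fc n) \<Longrightarrow> sum F A \<in> Fc n"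
  by (induction A rule: infinite_finite_induct) (auto simp: Fc_0 Fc_add)

lemma Fc_fcomp:
  assumes "f \<in> Fc l" "g \<in> Fc m" "1 \<le> i" "i \<le> l"
  shows "fcomp i f g \<in> Fc (l + m - 1)"
  unfolding fcomp_def
  using assms by (intro Fc_sum Fc_single) (auto simp: Fc_def leaves_graft)



fun phit :: "'a::comm_ring_1 \<Rightarrow> optree \<Rightarrow> 'a kpoly" where
  "phit lam Leaf = 1"
| "phit lam (Dn t) = theta lam 1 (leaves t) * phit lam t"
| "phit lam (Mu t u) = phit lam t * psubst (\<lambda>v. Xv (v + leaves t)) (phit lam u)"

lemma phit_Qc: "phit lam t \<in> Qc (leaves t)"
proof (induction t)
  case Leaf then show ?case by (simp add: Qc_1)
next
  case (Dn t) then show ?case by (simp add: Qc_mult Qc_theta)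
next
  case (Mu t u)
  have "psubst (\<lambda>v. Xv (v + leaves t)) (phit lam u) \<in> Qc (leaves t + leaves u)"
  proof (rule Qc_psubst)
    fix v assume "v \<in> vars (phit lam u)"
    then have "1 \<le> v" "v \<le> leaves u" using Qc_varsD[OF Mu(2)] by auto
    then show "Xv (v + leaves t) \<in> Qc (leaves t + leaves u)" by (intro Qc_Xv) auto
  qed
  moreover have "phit lam t \<in> Qc (leaves t + leaves u)" using Mu(1) by (rule Qc_mono) simp
  ultimately show ?case by (simp add: Qc_mult)
qed

lemma psubst_Qc_id:
  assumes "p \<in> Qc n" "\<And>v. 1 \<le> v \<Longrightarrow> v \<le> n \<Longrightarrow> \<sigma> v = Xv v"
  shows "psubst \<sigma> p = p"
proof -
  have "psubst \<sigma> p = psubst Xv p"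
    using assms by (intro psubst_cong) (auto dest: Qc_varsD[OF assms(1)])
  then show ?thesis by simp
qed

lemma phit_graft:
  assumes "1 \<le> i" "i \<le> leaves t"
  shows "phit lam (graft i t s) = qcomp lam (leaves t) (leaves s) i (phit lam t) (phit lam s)"
  using assms
proof (induction t arbitrary: i)
  case Leaf
  then have "i = 1" by simp
  then show ?case by (simp add: qcomp_def)
next
  case (Dn t)
  let ?L = "leaves t" and ?M = "leaves s"
  define \<sigma> where "\<sigma> = (\<lambda>j. if j < i then Xv j else if j = i then theta lam i ?M else (Xv (j + ?M - 1) :: 'a kpoly))"
  have M: "1 \<le> ?M" by (rule leaves_pos)
  have th: "psubst \<sigma> (theta lam 1 ?L) = theta lam 1 (?L + ?M - 1)"
    by (rule theta_nest[where a = i]) (use Dn.prems M in \<open>auto simp: \<sigma>_def\<close>)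
  have "phit lam (graft i (Dn t) s) = theta lam 1 (?L + ?M - 1) * qcomp lam ?L ?M i (phit lam t) (phit lam s)"
    using Dn by (simp add: leaves_graft)
  also have "\<dots> = qcomp lam ?L ?M i (theta lam 1 ?L * phit lam t) (phit lam s)"
    unfolding qcomp_def \<sigma>_def[symmetric] psubst_mult th by (simp add: mult_ac)
  finally show ?case by simp
next
  case (Mu t u)
  let ?P = "leaves t" and ?Q = "leaves u" and ?M = "leaves s"
  have M: "1 \<le> ?M" by (rule leaves_pos)
  define \<sigma> where "\<sigma> = (\<lambda>j. if j < i then Xv j else if j = i then theta lam i ?M else (Xv (j + ?M - 1) :: 'a kpoly))"
  show ?case
  proof (cases "i \<le> ?P")
    case True
    have g: "graft i (Mu t u) s = Mu (graft i t s) u" using True by simp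
    have e: "psubst \<sigma> (psubst (\<lambda>v. Xv (v + ?P)) (phit lam u)) = psubst (\<lambda>v. Xv (v + (?P + ?M - 1))) (phit lam u)"
      unfolding psubst_comp
    proof (rule psubst_cong)
      fix v assume "v \<in> vars (phit lam u)"
      then have "1 \<le> v" using Qc_varsD[OF phit_Qc] by auto
      then have "\<not> v + ?P < i" "v + ?P \<noteq> i" "v + ?P + ?M - 1 = v + (?P + ?M - 1)" using True M by linarith+
      then show "psubst \<sigma> (Xv (v + ?P)) = Xv (v + (?P + ?M - 1))" by (simp add: \<sigma>_def)
    qed
    have "phit lam (graft i (Mu t u) s) = qcomp lam ?P ?M i (phit lam t) (phit lam s) * psubst (\<lambda>v. Xv (v + (?P + ?M - 1))) (phit lam u)"
      unfolding g using Mu True by (simp add: leaves_graft)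
    also have "\<dots> = qcomp lam (?P + ?Q) ?M i (phit lam t * psubst (\<lambda>v. Xv (v + ?P)) (phit lam u)) (phit lam s)"
      unfolding qcomp_def \<sigma>_def[symmetric] by (simp add: psubst_mult e mult_ac)
    finally show ?thesis by simp
  next
    case False
    have g: "graft i (Mu t u) s = Mu t (graft (i - ?P) u s)" using False by simp
    have i2: "1 \<le> i - ?P" "i - ?P \<le> ?Q" using False Mu.prems by auto
    define \<sigma>' where "\<sigma>' = (\<lambda>j. if j < i - ?P then Xv j else if j = i - ?P then theta lam (i - ?P) ?M else (Xv (j + ?M - 1) :: 'a kpoly))"
    have e1: "psubst \<sigma> (phit lam t) = phit lam t"
      by (rule psubst_Qc_id[OF phit_Qc]) (use False in \<open>auto simp: \<sigma>_def\<close>)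
    have e2: "psubst \<sigma> (psubst (\<lambda>v. Xv (v + ?P)) (phit lam u)) = psubst (\<lambda>v. Xv (v + ?P)) (psubst \<sigma>' (phit lam u))"
      unfolding psubst_comp
    proof (rule psubst_cong)
      fix v assume "v \<in> vars (phit lam u)"
      then have v: "1 \<le> v" using Qc_varsD[OF phit_Qc] by auto
      show "psubst \<sigma> (Xv (v + ?P)) = psubst (\<lambda>v. Xv (v + ?P)) (\<sigma>' v)"
      proof (cases "v < i - ?P")
        case True
        then have "v + ?P < i" by linarith
        then show ?thesis using True by (simp add: \<sigma>_def \<sigma>'_def)
      next
        case F1: False
        show ?thesis
        proof (cases "v = i - ?P")
          case True
          then have vi: "v + ?P = i" using False by linarith
          have "psubst (\<lambda>v. Xv (v + ?P)) (theta lam (i - ?P) ?M) = theta lam (i - ?P + ?P) ?M"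
            by (rule theta_shift) simp
          then show ?thesis using True vi by (simp add: \<sigma>_def \<sigma>'_def)
        next
          case F2: False
          then have "v + ?P > i" "v > i - ?P" "v + ?P + ?M - 1 = v + ?M - 1 + ?P" using F1 False M by linarith+
          then show ?thesis by (simp add: \<sigma>_def \<sigma>'_def)
        qed
      qed
    qed
    have e3: "psubst (\<lambda>v. Xv (v + ?P)) (psubst (\<lambda>j. Xv (j + (i - ?P) - 1)) (phit lam s)) = psubst (\<lambda>j. Xv (j + i - 1)) (phit lam s)"
      unfolding psubst_comp
    proof (rule psubst_cong)
      fix v assume "v \<in> vars (phit lam s)"
      then have v: "1 \<le> v" using Qc_varsD[OF phit_Qc] by auto
      then have "v + (i - ?P) - 1 + ?P = v + i - 1" using False by linarith
      then show "psubst (\<lambda>v. Xv (v + ?P)) (Xv (v + (i - ?P) - 1)) = Xv (v + i - 1)" by (simp only: psubst_Xv)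
    qed
    have "phit lam (graft i (Mu t u) s) = phit lam t * psubst (\<lambda>v. Xv (v + ?P)) (qcomp lam ?Q ?M (i - ?P) (phit lam u) (phit lam s))"
      unfolding g using Mu.IH(2)[OF i2] by simp
    also have "\<dots> = qcomp lam (?P + ?Q) ?M i (phit lam t * psubst (\<lambda>v. Xv (v + ?P)) (phit lam u)) (phit lam s)"
      unfolding qcomp_def \<sigma>_def[symmetric] \<sigma>'_def[symmetric] psubst_mult e1 e2 e3 by (simp add: mult_ac)
    finally show ?thesis by simp
  qed
qed



definition Phi :: "'a::comm_ring_1 \<Rightarrow> (optree \<Rightarrow>\<^sub>0 'a) \<Rightarrow> 'a kpoly" where
  "Phi lam f = (\<Sum>t\<in>Poly_Mapping.keys f. pconst (Poly_Mapping.lookup f t) * phit lam t)"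

lemma Phi_superset:
  assumes "finite S" "Poly_Mapping.keys f \<subseteq> S"
  shows "Phi lam f = (\<Sum>t\<in>S. pconst (Poly_Mapping.lookup f t) * phit lam t)"
  unfolding Phi_def using assms by (intro sum.mono_neutral_left) (auto simp: in_keys_iff)

lemma Phi_add: "Phi lam (f + g) = Phi lam f + Phi lam g"
proof -
  let ?S = "Poly_Mapping.keys f \<union> Poly_Mapping.keys g"
  have k: "Poly_Mapping.keys (f + g) \<subseteq> ?S" by (rule keys_add)
  show ?thesis
    by (subst (1 2 3) Phi_superset[where S = ?S]) (use k in \<open>auto simp: lookup_add pconst_add distrib_right sum.distrib\<close>)
qed

lemma Phi_zero[simp]: "Phi lam 0 = 0" by (simp add: Phi_def)

lemma Phi_uminus: "Phi lam (- f) = - Phi lam f"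
proof -
  have "Phi lam f + Phi lam (- f) = 0" using Phi_add[of lam f "-f"] by simp
  then show ?thesis by (simp add: add_eq_0_iff)
qed

lemma Phi_diff: "Phi lam (f - g) = Phi lam f - Phi lam g"
  using Phi_add[of lam f "-g"] by (simp add: Phi_uminus)

lemma Phi_single: "Phi lam (Poly_Mapping.single t c) = pconst c * phit lam t"
  by (subst Phi_superset[where S = "{t}"]) auto

lemma Phi_ft: "Phi lam (ft t) = phit lam t"
  by (simp add: ft_def Phi_single)

lemma Phi_fsc: "Phi lam (fsc a f) = pconst a * Phi lam f"
  by (subst (1 2) Phi_superset[where S = "Poly_Mapping.keys f"])
     (use keys_fsc in \<open>auto simp: pconst_mult sum_distrib_left mult_ac\<close>)

lemma Phi_sum: "Phi lam (sum F A) = (\<Sum>a\<in>A. Phi lam (F a))"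
  by (induction A rule: infinite_finite_induct) (auto simp: Phi_add)

lemma Qc_sum: "(\<And>a. a \<in> A \<Longrightarrow> F a \<in> Qc n) \<Longrightarrow> sum F A \<in> Qc n"
  by (induction A rule: infinite_finite_induct) (auto simp: Qc_0 Qc_add)

lemma Phi_Qc: "f \<in> Fc n \<Longrightarrow> Phi lam f \<in> Qc n"
  unfolding Phi_def by (intro Qc_sum Qc_mult Qc_pconst) (auto simp: Fc_def intro: phit_Qc[of lam, THEN Qc_mono])

lemma qcomp_sum_left: "qcomp lam n m i (sum F A) y = (\<Sum>a\<in>A. qcomp lam n m i (F a) y)"
  by (simp add: qcomp_def psubst_sum sum_distrib_right)
lemma qcomp_sum_right: "qcomp lam n m i x (sum F A) = (\<Sum>a\<in>A. qcomp lam n m i x (F a))"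
  by (simp add: qcomp_def psubst_sum sum_distrib_left)
lemma qcomp_pconst_left: "qcomp lam n m i (pconst c * x) y = pconst c * qcomp lam n m i x y"
  by (simp add: qcomp_def psubst_mult mult_ac)
lemma qcomp_pconst_right: "qcomp lam n m i x (pconst c * y) = pconst c * qcomp lam n m i x y"
  by (simp add: qcomp_def psubst_mult mult_ac)

lemma Phi_fcomp:
  assumes "f \<in> Fc l" "g \<in> Fc m" "1 \<le> i" "i \<le> l"
  shows "Phi lam (fcomp i f g) = qcomp lam l m i (Phi lam f) (Phi lam g)"
proof -
  have "Phi lam (fcomp i f g) = (\<Sum>t\<in>Poly_Mapping.keys f. \<Sum>s\<in>Poly_Mapping.keys g.
      pconst (Poly_Mapping.lookup f t) * (pconst (Poly_Mapping.lookup g s) * qcomp lam l m i (phit lam t) (phit lam s)))"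
    unfolding fcomp_def Phi_sum Phi_single
  proof (intro sum.cong refl)
    fix t s assume ts: "t \<in> Poly_Mapping.keys f" "s \<in> Poly_Mapping.keys g"
    then have "leaves t = l" "leaves s = m" using assms by (auto simp: Fc_def)
    then show "pconst (Poly_Mapping.lookup f t * Poly_Mapping.lookup g s) * phit lam (graft i t s) =
      pconst (Poly_Mapping.lookup f t) * (pconst (Poly_Mapping.lookup g s) * qcomp lam l m i (phit lam t) (phit lam s))"
      using assms by (simp add: phit_graft pconst_mult mult_ac)
  qed
  also have "\<dots> = qcomp lam l m i (Phi lam f) (Phi lam g)"
    unfolding Phi_def qcomp_sum_left qcomp_sum_right qcomp_pconst_left qcomp_pconst_right
    by (simp add: sum_distrib_left, subst sum.swap, simp add: mult_ac)
  finally show ?thesis .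
qed

lemma asder_Fc: "(n, f) \<in> asder_ideal lam \<Longrightarrow> f \<in> Fc n"
proof (induction rule: asder_ideal.induct)
  case gen_assoc then show ?case by (simp add: rel_assoc_def Fc_diff Fc_ft)
next
  case gen_der then show ?case by (simp add: rel_der_def Fc_diff Fc_ft Fc_fsc)
next
  case (zero n) show ?case by (rule Fc_0)
next
  case (add n f g) show ?case using add.IH by (rule Fc_add)
next
  case (smul n f a) show ?case using smul.IH by (rule Fc_fsc)
next
  case (comp_left l f g m i) then show ?case by (intro Fc_fcomp)
next
  case (comp_right f l m g i) then show ?case by (intro Fc_fcomp)
qed

lemma theta_Suc0: "theta lam i (Suc 0) = Xv i" using theta_1 by simp

lemma theta_1_2: "theta lam 1 2 = Xv 1 + Xv 2 + pconst lam * Xv 1 * Xv 2"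
proof -
  have "{1..<1+2} = insert (2::nat) {1}" by auto
  then show ?thesis by (simp add: theta_Tset Tset_insert Tset_single)
qed

lemma ideal_kernel: "(n, f) \<in> asder_ideal lam \<Longrightarrow> Phi lam f = 0"
proof (induction rule: asder_ideal.induct)
  case gen_assoc then show ?case by (simp add: rel_assoc_def Phi_diff Phi_ft)
next
  case gen_der
  have a: "phit lam (Dn (Mu Leaf Leaf)) = Xv 1 + Xv 2 + pconst lam * Xv 1 * Xv 2"
    unfolding phit.simps leaves.simps one_add_one theta_1_2 by simp
  have b: "phit lam (Mu (Dn Leaf) Leaf) = Xv 1" by (simp add: theta_1 theta_Suc0)
  have c: "phit lam (Mu Leaf (Dn Leaf)) = Xv 2" by (simp add: theta_1 theta_Suc0 numeral_2_eq_2)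
  have d: "phit lam (Mu (Dn Leaf) (Dn Leaf)) = Xv 1 * Xv 2" by (simp add: theta_1 theta_Suc0 numeral_2_eq_2)
  show ?case unfolding rel_der_def Phi_diff Phi_ft Phi_fsc a b c d by (simp add: mult_ac)
next
  case (zero n) then show ?case by simp
next
  case (add n f g) then show ?case by (simp add: Phi_add)
next
  case (smul n f a) then show ?case by (simp add: Phi_fsc)
next
  case (comp_left l f g m i)
  then show ?case using asder_Fc[OF comp_left(1)] by (simp add: Phi_fcomp qcomp_def)
next
  case (comp_right f l m g i)
  then show ?case using asder_Fc[OF comp_right(2)] by (simp add: Phi_fcomp qcomp_def)
qed



lemma I_neg: "(n, f) \<in> asder_ideal lam \<Longrightarrow> (n, - f) \<in> asder_ideal lam"
  using asder_ideal.smul[of n f lam "-1"] by (simp add: fsc_minus)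

lemma I_eqv_refl: "1 \<le> n \<Longrightarrow> (n, f - f) \<in> asder_ideal lam"
  using asder_ideal.zero by simp

lemma I_eqv_trans: "(n, f - g) \<in> asder_ideal lam \<Longrightarrow> (n, g - h) \<in> asder_ideal lam \<Longrightarrow> (n, f - h) \<in> asder_ideal lam"
  using asder_ideal.add[of n "f - g" lam "g - h"] by simp

lemma I_eqv_sym: "(n, f - g) \<in> asder_ideal lam \<Longrightarrow> (n, g - f) \<in> asder_ideal lam"
  using I_neg[of n "f - g" lam] by simp

lemma I_eqv_add: "(n, f - f') \<in> asder_ideal lam \<Longrightarrow> (n, g - g') \<in> asder_ideal lam \<Longrightarrow> (n, (f + g) - (f' + g')) \<in> asder_ideal lam"
  using asder_ideal.add[of n "f - f'" lam "g - g'"] by (simp add: algebra_simps)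

lemma I_eqv_fsc: "(n, f - f') \<in> asder_ideal lam \<Longrightarrow> (n, fsc a f - fsc a f') \<in> asder_ideal lam"
  using asder_ideal.smul[of n "f - f'" lam a] by (simp add: fsc_diff)

lemma I_cong_left: "(l, f - f') \<in> asder_ideal lam \<Longrightarrow> g \<in> Fc m \<Longrightarrow> 1 \<le> m \<Longrightarrow> 1 \<le> i \<Longrightarrow> i \<le> l \<Longrightarrow>
    (l + m - 1, fcomp i f g - fcomp i f' g) \<in> asder_ideal lam"
  using asder_ideal.comp_left[of l "f - f'" lam g m i] by (simp add: fcomp_diff_left)

lemma I_cong_right: "f \<in> Fc l \<Longrightarrow> (m, g - g') \<in> asder_ideal lam \<Longrightarrow> 1 \<le> i \<Longrightarrow> i \<le> l \<Longrightarrow>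
    (l + m - 1, fcomp i f g - fcomp i f g') \<in> asder_ideal lam"
  using asder_ideal.comp_right[of f l m "g - g'" lam i] by (simp add: fcomp_diff_right)

definition NC :: "nat \<Rightarrow> (optree \<Rightarrow>\<^sub>0 'a::comm_ring_1) \<Rightarrow> bool" where
  "NC n g \<longleftrightarrow> (\<forall>t\<in>Poly_Mapping.keys g. \<exists>js. length js = n \<and> t = dmono_tree js)"

lemma NC_0: "NC n 0" by (simp add: NC_def)
lemma NC_add: "NC n f \<Longrightarrow> NC n g \<Longrightarrow> NC n (f + g)"
  using keys_add[of f g] unfolding NC_def by blast
lemma NC_fsc: "NC n f \<Longrightarrow> NC n (fsc a f)"
  using keys_fsc[of a f] unfolding NC_def by blast
lemma NC_ft: "length js = n \<Longrightarrow> NC n (ft (dmono_tree js))"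
  by (auto simp: NC_def ft_def)

lemma comb:
  assumes "finite A" "1 \<le> N" "\<And>a. a \<in> A \<Longrightarrow> \<exists>h. NC N h \<and> (N, H a - h) \<in> asder_ideal lam"
  shows "\<exists>h. NC N h \<and> (N, (\<Sum>a\<in>A. fsc (c a) (H a)) - h) \<in> asder_ideal lam"
  using assms(1,3)
proof (induction A rule: finite_induct)
  case empty
  have "NC N 0" by (rule NC_0)
  moreover have "(N, (\<Sum>a\<in>{}. fsc (c a) (H a)) - 0) \<in> asder_ideal lam"
    using asder_ideal.zero[OF assms(2)] by simp
  ultimately show ?case by blast
next
  case (insert x F)
  obtain h1 where h1: "NC N h1" "(N, H x - h1) \<in> asder_ideal lam" using insert.prems by blast
  obtain h2 where h2: "NC N h2" "(N, (\<Sum>a\<in>F. fsc (c a) (H a)) - h2) \<in> asder_ideal lam" using insert by blast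
  have "(N, (fsc (c x) (H x) + (\<Sum>a\<in>F. fsc (c a) (H a))) - (fsc (c x) h1 + h2)) \<in> asder_ideal lam"
    by (intro I_eqv_add I_eqv_fsc h1 h2)
  moreover have "NC N (fsc (c x) h1 + h2)" by (intro NC_add NC_fsc h1 h2)
  ultimately show ?case using insert(1,2) by (intro exI[of _ "fsc (c x) h1 + h2"]) (simp add: add.commute add.left_commute)
qed

lemma expand_pm: "g = (\<Sum>s\<in>Poly_Mapping.keys g. fsc (Poly_Mapping.lookup g s) (ft s))"
  by (simp add: ft_def fsc_single sum_single_keys)

lemma fcomp_sum_right: "fcomp i f (sum G A) = (\<Sum>a\<in>A. fcomp i f (G a))"
  by (induction A rule: infinite_finite_induct) (auto simp: fcomp_add_right)

lemma fcomp_expand: "fcomp i (ft T) g = (\<Sum>s\<in>Poly_Mapping.keys g. fsc (Poly_Mapping.lookup g s) (ft (graft i T s)))"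
proof -
  have "fcomp i (ft T) g = fcomp i (ft T) (\<Sum>s\<in>Poly_Mapping.keys g. fsc (Poly_Mapping.lookup g s) (ft s))"
    by (subst expand_pm) simp
  then show ?thesis by (simp add: fcomp_sum_right fcomp_fsc_right fcomp_ft)
qed

lemma iter_leaves[simp]: "leaves ((Dn ^^ j) Leaf) = 1"
  by (induction j) auto

lemma dmono_single: "dmono_tree [j] = (Dn ^^ j) Leaf"
  by (simp add: dmono_tree_def)

lemma dmono_cons: "js \<noteq> [] \<Longrightarrow> dmono_tree (j # js) = Mu ((Dn ^^ j) Leaf) (dmono_tree js)"
  by (cases js) (auto simp: dmono_tree_def)

lemma leaves_dmono: "js \<noteq> [] \<Longrightarrow> leaves (dmono_tree js) = length js"
proof (induction js)
  case Nil then show ?case by simp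
next
  case (Cons j js)
  then show ?case by (cases "js = []") (auto simp: dmono_single dmono_cons)
qed

lemma NC_Fc: "NC n g \<Longrightarrow> 1 \<le> n \<Longrightarrow> g \<in> Fc n"
proof -
  assume a: "NC n g" "1 \<le> n"
  show "g \<in> Fc n" unfolding Fc_def
  proof (rule CollectI, rule ballI)
    fix t assume "t \<in> Poly_Mapping.keys g"
    then obtain js where "length js = n" "t = dmono_tree js" using a(1) by (auto simp: NC_def)
    moreover then have "js \<noteq> []" using a(2) by auto
    ultimately show "leaves t = n" by (simp add: leaves_dmono)
  qed
qed

lemma M_nf:
  "js1 \<noteq> [] \<Longrightarrow> js2 \<noteq> [] \<Longrightarrow>
   (length js1 + length js2, ft (Mu (dmono_tree js1) (dmono_tree js2)) - ft (dmono_tree (js1 @ js2))) \<in> asder_ideal lam"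
proof (induction js1)
  case Nil then show ?case by simp
next
  case (Cons j js1)
  show ?case
  proof (cases "js1 = []")
    case True
    then show ?thesis using Cons.prems by (simp add: dmono_single dmono_cons asder_ideal.zero)
  next
    case False
    let ?a = "(Dn ^^ j) Leaf" and ?A = "dmono_tree js1" and ?B = "dmono_tree js2"
    let ?p = "length js1" and ?q = "length js2"
    have p: "1 \<le> ?p" "1 \<le> ?q" using False Cons.prems by (auto simp: Suc_le_eq)
    have lA: "leaves ?A = ?p" "leaves ?B = ?q" using False Cons.prems by (auto simp: leaves_dmono)
    have s1: "(?q + 2, fcomp 3 rel_assoc (ft ?B)) \<in> asder_ideal lam"
      using asder_ideal.comp_left[OF asder_ideal.gen_assoc, of "ft ?B" ?q 3] p lA by (simp add: Fc_ft)
    have s2: "(?q + ?p + 1, fcomp 2 (fcomp 3 rel_assoc (ft ?B)) (ft ?A)) \<in> asder_ideal lam"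
      using asder_ideal.comp_left[OF s1, of "ft ?A" ?p 2] p lA by (simp add: Fc_ft)
    have s3: "(?q + ?p + 1, fcomp 1 (fcomp 2 (fcomp 3 rel_assoc (ft ?B)) (ft ?A)) (ft ?a)) \<in> asder_ideal lam"
      using asder_ideal.comp_left[OF s2, of "ft ?a" 1 1] p by (simp add: Fc_ft)
    have e: "fcomp 1 (fcomp 2 (fcomp 3 rel_assoc (ft ?B)) (ft ?A)) (ft ?a) = ft (Mu (Mu ?a ?A) ?B) - ft (Mu ?a (Mu ?A ?B))"
      by (simp add: rel_assoc_def fcomp_diff_left fcomp_ft)
    have st1: "(?q + ?p + 1, ft (Mu (Mu ?a ?A) ?B) - ft (Mu ?a (Mu ?A ?B))) \<in> asder_ideal lam"
      using s3 by (simp only: e)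
    have IH: "(?p + ?q, ft (Mu ?A ?B) - ft (dmono_tree (js1 @ js2))) \<in> asder_ideal lam"
      using Cons.IH False Cons.prems by simp
    have st2: "(1 + 1 + (?p + ?q) - 1, fcomp 2 (ft (Mu ?a Leaf)) (ft (Mu ?A ?B)) - fcomp 2 (ft (Mu ?a Leaf)) (ft (dmono_tree (js1 @ js2)))) \<in> asder_ideal lam"
      by (rule I_cong_right[OF _ IH]) (auto simp: Fc_ft)
    have st2': "(?q + ?p + 1, ft (Mu ?a (Mu ?A ?B)) - ft (Mu ?a (dmono_tree (js1 @ js2)))) \<in> asder_ideal lam"
      using st2 by (simp add: fcomp_ft add.commute)
    have "(?q + ?p + 1, ft (Mu (Mu ?a ?A) ?B) - ft (Mu ?a (dmono_tree (js1 @ js2)))) \<in> asder_ideal lam"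
      by (rule I_eqv_trans[OF st1 st2'])
    moreover have "dmono_tree (j # js1 @ js2) = Mu ?a (dmono_tree (js1 @ js2))"
      using False by (simp add: dmono_cons)
    moreover have "dmono_tree (j # js1) = Mu ?a ?A" using False by (simp add: dmono_cons)
    ultimately show ?thesis by (simp add: add.commute)
  qed
qed



lemma NC_sum: "(\<And>a. a \<in> A \<Longrightarrow> NC n (F a)) \<Longrightarrow> NC n (sum F A)"
  by (induction A rule: infinite_finite_induct) (auto simp: NC_0 NC_add)

lemma Mu_left_nf:
  assumes "NC n h" "1 \<le> n"
  shows "NC (Suc n) (fcomp 2 (ft (Mu ((Dn ^^ j) Leaf) Leaf)) h)"
  unfolding fcomp_expand
proof (intro NC_sum NC_fsc)
  fix s assume "s \<in> Poly_Mapping.keys h"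
  then obtain js where js: "length js = n" "s = dmono_tree js" using assms(1) by (auto simp: NC_def)
  then have "js \<noteq> []" using assms(2) by auto
  then have "graft 2 (Mu ((Dn ^^ j) Leaf) Leaf) s = dmono_tree (j # js)" using js by (simp add: dmono_cons)
  then show "NC (Suc n) (ft (graft 2 (Mu ((Dn ^^ j) Leaf) Leaf) s))" using js by (simp add: NC_ft)
qed

lemma D_nf:
  "js \<noteq> [] \<Longrightarrow> \<exists>h. NC (length js) h \<and> (length js, ft (Dn (dmono_tree js)) - h) \<in> asder_ideal lam"
proof (induction js)
  case Nil then show ?case by simp
next
  case (Cons j js)
  show ?case
  proof (cases "js = []")
    case True
    have "Dn (dmono_tree [j]) = dmono_tree [Suc j]" by (simp add: dmono_single)
    then show ?thesis using True
      by (intro exI[of _ "ft (dmono_tree [Suc j])"]) (simp add: NC_ft asder_ideal.zero)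
  next
    case False
    let ?a = "(Dn ^^ j) Leaf" and ?B = "dmono_tree js" and ?n = "length js"
    have n: "1 \<le> ?n" using False by (simp add: Suc_le_eq)
    have lB: "leaves ?B = ?n" using False by (simp add: leaves_dmono)
    have s1: "(2 + ?n - 1, fcomp 2 (rel_der lam) (ft ?B)) \<in> asder_ideal lam"
      using asder_ideal.comp_left[OF asder_ideal.gen_der, of "ft ?B" ?n 2] n lB by (simp add: Fc_ft)
    have s2: "(2 + ?n - 1 + 1 - 1, fcomp 1 (fcomp 2 (rel_der lam) (ft ?B)) (ft ?a)) \<in> asder_ideal lam"
      using asder_ideal.comp_left[OF s1, of "ft ?a" 1 1] n by (simp add: Fc_ft)
    have e: "fcomp 1 (fcomp 2 (rel_der lam) (ft ?B)) (ft ?a) =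
      ft (Dn (Mu ?a ?B)) - (ft (Mu (Dn ?a) ?B) + ft (Mu ?a (Dn ?B)) + fsc lam (ft (Mu (Dn ?a) (Dn ?B))))"
      by (simp add: rel_der_def fcomp_diff_left fcomp_fsc_left fcomp_ft)
    have st1: "(Suc ?n, ft (Dn (Mu ?a ?B)) - (ft (Mu (Dn ?a) ?B) + ft (Mu ?a (Dn ?B)) + fsc lam (ft (Mu (Dn ?a) (Dn ?B))))) \<in> asder_ideal lam"
      using s2 n by (simp only: e) simp
    obtain h' where h': "NC ?n h'" "(?n, ft (Dn ?B) - h') \<in> asder_ideal lam" using Cons.IH False by blast
    have c2: "(1 + 1 + ?n - 1, fcomp 2 (ft (Mu ?a Leaf)) (ft (Dn ?B)) - fcomp 2 (ft (Mu ?a Leaf)) h') \<in> asder_ideal lam"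
      by (rule I_cong_right[OF _ h'(2)]) (auto simp: Fc_ft)
    have c3: "(1 + 1 + ?n - 1, fcomp 2 (ft (Mu (Dn ?a) Leaf)) (ft (Dn ?B)) - fcomp 2 (ft (Mu (Dn ?a) Leaf)) h') \<in> asder_ideal lam"
      by (rule I_cong_right[OF _ h'(2)]) (auto simp: Fc_ft)
    have c2': "(Suc ?n, ft (Mu ?a (Dn ?B)) - fcomp 2 (ft (Mu ?a Leaf)) h') \<in> asder_ideal lam"
      using c2 by (simp add: fcomp_ft)
    have c3': "(Suc ?n, ft (Mu (Dn ?a) (Dn ?B)) - fcomp 2 (ft (Mu ((Dn ^^ Suc j) Leaf) Leaf)) h') \<in> asder_ideal lam"
      using c3 by (simp add: fcomp_ft)
    let ?h = "ft (Mu (Dn ?a) ?B) + fcomp 2 (ft (Mu ?a Leaf)) h' + fsc lam (fcomp 2 (ft (Mu ((Dn ^^ Suc j) Leaf) Leaf)) h')"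
    have "(Suc ?n, (ft (Mu (Dn ?a) ?B) + ft (Mu ?a (Dn ?B)) + fsc lam (ft (Mu (Dn ?a) (Dn ?B)))) - ?h) \<in> asder_ideal lam"
      by (intro I_eqv_add I_eqv_fsc c2' c3' I_eqv_refl) simp
    then have fin: "(Suc ?n, ft (Dn (Mu ?a ?B)) - ?h) \<in> asder_ideal lam"
      by (rule I_eqv_trans[OF st1])
    have "Mu (Dn ?a) ?B = dmono_tree (Suc j # js)" using False by (simp add: dmono_cons)
    then have "NC (Suc ?n) ?h"
      by (intro NC_add NC_fsc Mu_left_nf h' n) (simp add: NC_ft)
    moreover have "dmono_tree (j # js) = Mu ?a ?B" using False by (simp add: dmono_cons)
    ultimately show ?thesis using fin by auto
  qed
qed



lemma NF: "\<exists>h. NC (leaves t) h \<and> (leaves t, ft t - h) \<in> asder_ideal lam"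
proof (induction t)
  case Leaf
  have "dmono_tree [0] = Leaf" by (simp add: dmono_single)
  then have "NC 1 (ft Leaf)" using NC_ft[of "[0]" 1] by simp
  moreover have "(1, ft Leaf - ft Leaf) \<in> asder_ideal lam" by (rule I_eqv_refl) simp
  ultimately show ?case by auto
next
  case (Dn t)
  let ?n = "leaves t"
  obtain g where g: "NC ?n g" "(?n, ft t - g) \<in> asder_ideal lam" using Dn.IH by blast
  have n: "1 \<le> ?n" by (rule leaves_pos)
  have c: "(1 + ?n - 1, fcomp 1 (ft (Dn Leaf)) (ft t) - fcomp 1 (ft (Dn Leaf)) g) \<in> asder_ideal lam"
    by (rule I_cong_right[OF _ g(2)]) (auto simp: Fc_ft)
  have e1: "fcomp 1 (ft (Dn Leaf)) (ft t) = ft (Dn t)" by (simp add: fcomp_ft)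
  have e2: "fcomp 1 (ft (Dn Leaf)) g = (\<Sum>s\<in>Poly_Mapping.keys g. fsc (Poly_Mapping.lookup g s) (ft (Dn s)))"
    by (simp add: fcomp_expand)
  have c': "(?n, ft (Dn t) - (\<Sum>s\<in>Poly_Mapping.keys g. fsc (Poly_Mapping.lookup g s) (ft (Dn s)))) \<in> asder_ideal lam"
    using c[unfolded e1 e2] by simp
  have "\<exists>h. NC ?n h \<and> (?n, (\<Sum>s\<in>Poly_Mapping.keys g. fsc (Poly_Mapping.lookup g s) (ft (Dn s))) - h) \<in> asder_ideal lam"
  proof (rule comb[OF finite_keys n])
    fix s assume "s \<in> Poly_Mapping.keys g"
    then obtain js where js: "length js = ?n" "s = dmono_tree js" using g(1) by (auto simp: NC_def)
    then have "js \<noteq> []" using n by auto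
    then show "\<exists>h. NC ?n h \<and> (?n, ft (Dn s) - h) \<in> asder_ideal lam" using D_nf[of js lam] js by simp
  qed
  then obtain h where "NC ?n h" "(?n, (\<Sum>s\<in>Poly_Mapping.keys g. fsc (Poly_Mapping.lookup g s) (ft (Dn s))) - h) \<in> asder_ideal lam"
    by blast
  then show ?case using I_eqv_trans[OF c'] by auto
next
  case (Mu t u)
  let ?p = "leaves t" and ?q = "leaves u"
  obtain g1 where g1: "NC ?p g1" "(?p, ft t - g1) \<in> asder_ideal lam" using Mu.IH(1) by blast
  obtain g2 where g2: "NC ?q g2" "(?q, ft u - g2) \<in> asder_ideal lam" using Mu.IH(2) by blast
  have p: "1 \<le> ?p" "1 \<le> ?q" by (rule leaves_pos)+
  have c: "(?p + 1 + ?q - 1, fcomp (?p + 1) (ft (Mu t Leaf)) (ft u) - fcomp (?p + 1) (ft (Mu t Leaf)) g2) \<in> asder_ideal lam"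
    by (rule I_cong_right[OF _ g2(2)]) (auto simp: Fc_ft)
  have gr: "graft (?p + 1) (Mu t Leaf) s = Mu t s" for s by simp
  have c': "(?p + ?q, ft (Mu t u) - (\<Sum>s\<in>Poly_Mapping.keys g2. fsc (Poly_Mapping.lookup g2 s) (ft (Mu t s)))) \<in> asder_ideal lam"
  proof -
    have e1: "fcomp (?p + 1) (ft (Mu t Leaf)) (ft u) = ft (Mu t u)" by (simp add: fcomp_ft)
    have e2: "fcomp (?p + 1) (ft (Mu t Leaf)) g2 = (\<Sum>s\<in>Poly_Mapping.keys g2. fsc (Poly_Mapping.lookup g2 s) (ft (Mu t s)))"
      by (simp only: fcomp_expand gr)
    show ?thesis using c[unfolded e1 e2] by simp
  qed
  have "\<exists>h. NC (?p + ?q) h \<and> (?p + ?q, (\<Sum>s\<in>Poly_Mapping.keys g2. fsc (Poly_Mapping.lookup g2 s) (ft (Mu t s))) - h) \<in> asder_ideal lam"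
  proof (rule comb[OF finite_keys])
    show "1 \<le> ?p + ?q" using p by simp
    fix s2 assume "s2 \<in> Poly_Mapping.keys g2"
    then obtain js2 where js2: "length js2 = ?q" "s2 = dmono_tree js2" using g2(1) by (auto simp: NC_def)
    then have js2n: "js2 \<noteq> []" using p by auto
    have d: "(1 + ?q + ?p - 1, fcomp 1 (ft (Mu Leaf s2)) (ft t) - fcomp 1 (ft (Mu Leaf s2)) g1) \<in> asder_ideal lam"
      by (rule I_cong_right[OF _ g1(2)]) (use js2 js2n in \<open>auto simp: Fc_ft leaves_dmono\<close>)
    have gr2: "graft 1 (Mu Leaf s2) s = Mu s s2" for s by simp
    have d': "(?p + ?q, ft (Mu t s2) - (\<Sum>s\<in>Poly_Mapping.keys g1. fsc (Poly_Mapping.lookup g1 s) (ft (Mu s s2)))) \<in> asder_ideal lam"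
    proof -
      have e1: "fcomp 1 (ft (Mu Leaf s2)) (ft t) = ft (Mu t s2)" by (simp add: fcomp_ft)
      have e2: "fcomp 1 (ft (Mu Leaf s2)) g1 = (\<Sum>s\<in>Poly_Mapping.keys g1. fsc (Poly_Mapping.lookup g1 s) (ft (Mu s s2)))"
        by (simp only: fcomp_expand gr2)
      show ?thesis using d[unfolded e1 e2] by (simp add: add.commute)
    qed
    have "\<exists>h. NC (?p + ?q) h \<and> (?p + ?q, (\<Sum>s\<in>Poly_Mapping.keys g1. fsc (Poly_Mapping.lookup g1 s) (ft (Mu s s2))) - h) \<in> asder_ideal lam"
    proof (rule comb[OF finite_keys])
      show "1 \<le> ?p + ?q" using p by simp
      fix s1 assume "s1 \<in> Poly_Mapping.keys g1"
      then obtain js1 where js1: "length js1 = ?p" "s1 = dmono_tree js1" using g1(1) by (auto simp: NC_def)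
      then have "js1 \<noteq> []" using p by auto
      then have "(?p + ?q, ft (Mu s1 s2) - ft (dmono_tree (js1 @ js2))) \<in> asder_ideal lam"
        using M_nf[of js1 js2 lam] js1 js2 js2n by simp
      moreover have "NC (?p + ?q) (ft (dmono_tree (js1 @ js2)))" using js1 js2 by (simp add: NC_ft)
      ultimately show "\<exists>h. NC (?p + ?q) h \<and> (?p + ?q, ft (Mu s1 s2) - h) \<in> asder_ideal lam" by blast
    qed
    then show "\<exists>h. NC (?p + ?q) h \<and> (?p + ?q, ft (Mu t s2) - h) \<in> asder_ideal lam"
      using I_eqv_trans[OF d'] by blast
  qed
  then show ?case using I_eqv_trans[OF c'] by auto
qed

definition monl :: "nat list \<Rightarrow> (nat \<Rightarrow>\<^sub>0 nat)" where
  "monl js = (\<Sum>k<length js. Poly_Mapping.single (Suc k) (js ! k))"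

lemma lookup_monl: "Poly_Mapping.lookup (monl js) v = (if 1 \<le> v \<and> v \<le> length js then js ! (v - 1) else 0)"
proof -
  have "Poly_Mapping.lookup (monl js) v = (\<Sum>k<length js. if k = v - 1 \<and> 1 \<le> v then js ! k else 0)"
    unfolding monl_def lookup_sum by (intro sum.cong refl) (auto simp: lookup_single when_def)
  also have "\<dots> = (if 1 \<le> v \<and> v \<le> length js then js ! (v - 1) else 0)"
    by (cases "1 \<le> v") (auto simp: sum.delta')
  finally show ?thesis .
qed

lemma monl_inj: "length js = length js' \<Longrightarrow> monl js = monl js' \<Longrightarrow> js = js'"
proof (rule nth_equalityI)
  assume a: "length js = length js'" "monl js = monl js'"
  then show "length js = length js'" by simp
  fix k assume "k < length js"
  then show "js ! k = js' ! k"
    using arg_cong[OF a(2), of "\<lambda>m. Poly_Mapping.lookup m (Suc k)"] a(1) by (simp add: lookup_monl)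
qed

lemma phit_iter: "phit lam ((Dn ^^ j) Leaf) = Xv 1 ^ j"
  by (induction j) (simp_all add: theta_Suc0)

lemma phit_dmono: "js \<noteq> [] \<Longrightarrow> phit lam (dmono_tree js) = (\<Prod>k<length js. Xv (k + 1) ^ (js ! k))"
proof (induction js)
  case Nil then show ?case by simp
next
  case (Cons j js)
  show ?case
  proof (cases "js = []")
    case True then show ?thesis by (simp add: dmono_single phit_iter)
  next
    case False
    have "phit lam (dmono_tree (j # js)) = Xv 1 ^ j * psubst (\<lambda>v. Xv (v + 1)) (\<Prod>k<length js. Xv (k + 1) ^ (js ! k))"
      using False Cons.IH by (simp add: dmono_cons phit_iter)
    also have "\<dots> = Xv 1 ^ j * (\<Prod>k<length js. Xv (Suc k + 1) ^ (js ! k))"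
      by (simp add: psubst_prod psubst_power)
    also have "\<dots> = (\<Prod>k<length (j # js). Xv (k + 1) ^ ((j # js) ! k))"
      unfolding length_Cons prod.lessThan_Suc_shift by simp
    finally show ?thesis .
  qed
qed

lemma prodX_monl: "(\<Prod>k<length js. Xv (k + 1) ^ (js ! k)) = (Poly_Mapping.single (monl js) 1 :: 'a::comm_ring_1 kpoly)"
  by (simp add: Xv_power prod_singles monl_def)

lemma NC_Phi_zero:
  assumes "NC n h" "1 \<le> n" "Phi lam h = 0"
  shows "h = 0"
proof (rule ccontr)
  assume "h \<noteq> 0"
  then have "Poly_Mapping.keys h \<noteq> {}" by simp
  then obtain t0 where t0: "t0 \<in> Poly_Mapping.keys h" by blast
  have jsof: "\<exists>js. length js = n \<and> t = dmono_tree js" if "t \<in> Poly_Mapping.keys h" for t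
    using assms(1) that by (auto simp: NC_def)
  define J where "J t = (SOME js. length js = n \<and> t = dmono_tree js)" for t
  have J: "length (J t) = n" "t = dmono_tree (J t)" if "t \<in> Poly_Mapping.keys h" for t
    using someI_ex[OF jsof[OF that]] by (auto simp: J_def)
  have ph: "pconst (Poly_Mapping.lookup h t) * phit lam t = Poly_Mapping.single (monl (J t)) (Poly_Mapping.lookup h t)"
    if "t \<in> Poly_Mapping.keys h" for t
  proof -
    have "J t \<noteq> []" using J[OF that] assms(2) by auto
    then have "phit lam (dmono_tree (J t)) = Poly_Mapping.single (monl (J t)) 1"
      using phit_dmono[of "J t" lam] prodX_monl[of "J t"] by simp
    then have "phit lam t = Poly_Mapping.single (monl (J t)) 1"
      using J(2)[OF that] by simp
    then show ?thesis by (simp add: pconst_def mult_single)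
  qed
  have "Poly_Mapping.lookup (Phi lam h) (monl (J t0)) =
      (\<Sum>t\<in>Poly_Mapping.keys h. if t = t0 then Poly_Mapping.lookup h t else 0)"
    unfolding Phi_def lookup_sum
  proof (intro sum.cong refl)
    fix t assume t: "t \<in> Poly_Mapping.keys h"
    have "monl (J t) = monl (J t0) \<longleftrightarrow> t = t0"
    proof
      assume "monl (J t) = monl (J t0)"
      then have "J t = J t0" using J(1)[OF t] J(1)[OF t0] by (intro monl_inj) auto
      then show "t = t0" using J(2)[OF t] J(2)[OF t0] by simp
    qed simp
    then show "Poly_Mapping.lookup (pconst (Poly_Mapping.lookup h t) * phit lam t) (monl (J t0)) =
       (if t = t0 then Poly_Mapping.lookup h t else 0)"
      by (simp add: ph[OF t] lookup_single when_def)
  qed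
  also have "\<dots> = Poly_Mapping.lookup h t0" using t0 by (simp add: sum.delta')
  finally have "Poly_Mapping.lookup h t0 = 0" using assms(3) by simp
  then show False using t0 by (simp add: in_keys_iff)
qed

lemma kernel_ideal:
  assumes "1 \<le> n" "f \<in> Fc n" "Phi lam f = 0"
  shows "(n, f) \<in> asder_ideal lam"
proof -
  have "\<exists>h. NC n h \<and> (n, (\<Sum>t\<in>Poly_Mapping.keys f. fsc (Poly_Mapping.lookup f t) (ft t)) - h) \<in> asder_ideal lam"
  proof (rule comb[OF finite_keys assms(1)])
    fix t assume "t \<in> Poly_Mapping.keys f"
    then have "leaves t = n" using assms(2) by (auto simp: Fc_def)
    then show "\<exists>h. NC n h \<and> (n, ft t - h) \<in> asder_ideal lam" using NF[of t lam] by simp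
  qed
  then obtain h where h: "NC n h" "(n, f - h) \<in> asder_ideal lam" using expand_pm[of f] by auto
  have "Phi lam (f - h) = 0" using ideal_kernel[OF h(2)] .
  then have "Phi lam h = 0" using assms(3) by (simp add: Phi_diff)
  then have "h = 0" using NC_Phi_zero[OF h(1) assms(1)] by simp
  then show ?thesis using h(2) by simp
qed



lemma monl_js_of:
  assumes "Poly_Mapping.keys mon \<subseteq> {1..n}"
  shows "monl (map (\<lambda>k. Poly_Mapping.lookup mon (Suc k)) [0..<n]) = mon"
proof (rule poly_mapping_eqI)
  fix v
  show "Poly_Mapping.lookup (monl (map (\<lambda>k. Poly_Mapping.lookup mon (Suc k)) [0..<n])) v = Poly_Mapping.lookup mon v"
  proof (cases "1 \<le> v \<and> v \<le> n")
    case True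
    then have "v - 1 < n" "Suc (v - 1) = v" by auto
    then show ?thesis using True by (simp add: lookup_monl)
  next
    case False
    then have "v \<notin> Poly_Mapping.keys mon" using assms by auto
    have "Poly_Mapping.lookup (monl (map (\<lambda>k. Poly_Mapping.lookup mon (Suc k)) [0..<n])) v = 0"
      using False by (simp only: lookup_monl length_map length_upt diff_zero if_False)
    then show ?thesis using \<open>v \<notin> Poly_Mapping.keys mon\<close> by (simp add: in_keys_iff)
  qed
qed

lemma Phi_surj:
  assumes "1 \<le> n" "p \<in> Qc n"
  shows "p \<in> Phi lam ` Fc n"
proof -
  define J where "J mon = map (\<lambda>k. Poly_Mapping.lookup mon (Suc k)) [0..<n]" for mon :: "nat \<Rightarrow>\<^sub>0 nat"
  define f where "f = (\<Sum>mon\<in>Poly_Mapping.keys p. Poly_Mapping.single (dmono_tree (J mon)) (Poly_Mapping.lookup p mon))"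
  have Jne: "J mon \<noteq> []" "length (J mon) = n" for mon using assms(1) by (auto simp: J_def)
  have "f \<in> Fc n" unfolding f_def
    by (intro Fc_sum Fc_single) (simp add: leaves_dmono Jne)
  moreover have "Phi lam f = p"
  proof -
    have "Phi lam f = (\<Sum>mon\<in>Poly_Mapping.keys p. pconst (Poly_Mapping.lookup p mon) * phit lam (dmono_tree (J mon)))"
      unfolding f_def Phi_sum Phi_single ..
    also have "\<dots> = (\<Sum>mon\<in>Poly_Mapping.keys p. Poly_Mapping.single mon (Poly_Mapping.lookup p mon))"
    proof (intro sum.cong refl)
      fix mon assume mon: "mon \<in> Poly_Mapping.keys p"
      then have "Poly_Mapping.keys mon \<subseteq> {1..n}" using assms(2) by (auto simp: Qc_def)
      then have "monl (J mon) = mon" unfolding J_def by (rule monl_js_of)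
      then have "phit lam (dmono_tree (J mon)) = Poly_Mapping.single mon 1"
        using phit_dmono[OF Jne(1), of lam mon] prodX_monl[of "J mon"] by simp
      then show "pconst (Poly_Mapping.lookup p mon) * phit lam (dmono_tree (J mon)) = Poly_Mapping.single mon (Poly_Mapping.lookup p mon)"
        by (simp add: pconst_def mult_single)
    qed
    also have "\<dots> = p" by (rule sum_single_keys)
    finally show ?thesis .
  qed
  ultimately show ?thesis by blast
qed

theorem theorem4p2:
  fixes lam :: "'a::comm_ring_1"
  shows "ns_operad (Qc :: nat \<Rightarrow> 'a kpoly set) qsc 1 (qcomp lam)
    \<and> (\<exists>\<phi> :: (optree \<Rightarrow>\<^sub>0 'a) \<Rightarrow> 'a kpoly.
         (\<forall>n\<ge>1. \<forall>f\<in>Fc n. \<forall>g\<in>Fc n. \<phi> (f + g) = \<phi> f + \<phi> g)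
       \<and> (\<forall>n\<ge>1. \<forall>a. \<forall>f\<in>Fc n. \<phi> (fsc a f) = qsc a (\<phi> f))
       \<and> (\<forall>n\<ge>1. \<phi> ` Fc n = Qc n)
       \<and> (\<forall>n\<ge>1. \<forall>f\<in>Fc n. \<phi> f = 0 \<longleftrightarrow> (n, f) \<in> asder_ideal lam)
       \<and> (\<forall>l m i f g. 1 \<le> m \<longrightarrow> 1 \<le> i \<longrightarrow> i \<le> l \<longrightarrow> f \<in> Fc l \<longrightarrow> g \<in> Fc m \<longrightarrow>
            \<phi> (fcomp i f g) = qcomp lam l m i (\<phi> f) (\<phi> g))
       \<and> \<phi> (ft Leaf) = 1
       \<and> \<phi> (ft (Dn Leaf)) = Xv 1
       \<and> \<phi> (ft (Mu Leaf Leaf)) = 1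
       \<and> (\<forall>js. js \<noteq> [] \<longrightarrow>
            \<phi> (ft (dmono_tree js)) = (\<Prod>k<length js. Xv (k + 1) ^ (js ! k))))"
proof (intro conjI exI[of _ "Phi lam"] allI impI ballI)
  show "ns_operad (Qc :: nat \<Rightarrow> 'a kpoly set) qsc 1 (qcomp lam)" by (rule Q_operad)
  show "Phi lam (f + g) = Phi lam f + Phi lam g" for f g by (rule Phi_add)
  show "Phi lam (fsc a f) = qsc a (Phi lam f)" for a f by (simp add: Phi_fsc qsc_def)
  show "Phi lam ` Fc n = Qc n" if "1 \<le> n" for n
    using Phi_Qc[of _ n lam] Phi_surj[OF that, of _ lam] by blast
  show "Phi lam f = 0 \<longleftrightarrow> (n, f) \<in> asder_ideal lam" if "1 \<le> n" "f \<in> Fc n" for n f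
    using ideal_kernel[of n f lam] kernel_ideal[OF that, of lam] by blast
  show "Phi lam (fcomp i f g) = qcomp lam l m i (Phi lam f) (Phi lam g)"
    if "1 \<le> m" "1 \<le> i" "i \<le> l" "f \<in> Fc l" "g \<in> Fc m" for l m i f g
    using that by (intro Phi_fcomp) auto
  show "Phi lam (ft Leaf) = 1" by (simp add: Phi_ft)
  show "Phi lam (ft (Dn Leaf)) = Xv 1" by (simp add: Phi_ft theta_Suc0)
  show "Phi lam (ft (Mu Leaf Leaf)) = 1" by (simp add: Phi_ft)
  show "Phi lam (ft (dmono_tree js)) = (\<Prod>k<length js. Xv (k + 1) ^ (js ! k))" if "js \<noteq> []" for js
    using that by (simp add: Phi_ft phit_dmono)
qed

end
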